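(* Let $\mathcal{Q}$ be a quadrangle with vertices $A,C,B,D$ in cyclic order, and let $a,b$ be the tangent lines to $\mathcal{C}_{\mathcal{Q}}$ at $A$ and $B$. For $X\in (A\vee B)\setminus\{A,B\}$ let $x=(X\cdot\rho_{A,B})\vee(a\wedge b)$; then $X\notin x$ and $$\mathcal{C}_{\mathcal{Q}}=\{\,C\cdot\rho_{X,x}\;:\;X\in (A\vee B)\setminus\{A,B\}\,\}\cup\{A,B\}.$$
   Context: $\mathbb{P}^2$ denotes the projective plane over a field $F$ with $\operatorname{char}F\neq 2$. For distinct points $X,Y$, $X\vee Y$ is the line through them; for distinct lines $\ell,m$, $\ell\wedge m$ is their common point. Maps act on the right: $X\cdot\rho$. Four distinct collinear points $A,C,B,D$ form a harmonic set with conjugate pairs $\{A,B\}$ and $\{C,D\}$ if the cross-ratio $(A,B;C,D)=-1$; $D$ is then the harmonic conjugate of $C$ with respect to $A,B$. Four distinct concurrent lines form a harmonic pencil with given conjugate pairs if some (equivalently every) line not through their common point meets them in a harmonic set with the corresponding conjugate pairs. For distinct points $A,B$ on a line $\ell$, $\rho_{A,B}:\ell\to\ell$ fixes $A,B$ and sends every other point of $\ell$ to its harmonic conjugate with respect to $A,B$. For a point $P$ and a line $m$ with $P\notin m$, the harmonic reflection $\rho_{P,m}$ of $\mathbb{P}^2$ fixes $P$ and every point of $m$ and sends every other point $X$ to the harmonic conjugate of $X$ with respect to $P$ and $(X\vee P)\wedge m$. A quadrangle $\mathcal{Q}$ with vertices $A,C,B,D$ (in cyclic order) consists of four points in general position (no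 three collinear) together with this cyclic order up to reversal; its sides are $A\vee C, C\vee B, B\vee D, D\vee A$, and its diagonal lines are $A\vee B$ and $C\vee D$. The harmonic curve $\mathcal{C}_{\mathcal{Q}}$ is the set consisting of $A,C,B,D$ together with all points $Z\notin\{A,B,C,D\}$ such that $Z\vee A, Z\vee C, Z\vee B, Z\vee D$ are four distinct lines forming a harmonic pencil with conjugate pairs $\{Z\vee A,Z\vee B\}$ and $\{Z\vee C,Z\vee D\}$. The tangent line at a vertex $V$ of $\mathcal{Q}$ is the harmonic conjugate, within the pencil of lines through $V$, of the diagonal line through $V$ with respect to the two sides through $V$. *)

theory Defs
  imports Main
begin

type_synonym 'a vec3 = "'a \<times> 'a \<times> 'a"

definition vzero :: "'a::field vec3" where "vzero = (0, 0, 0)"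

definition vscale :: "'a::field \<Rightarrow> 'a vec3 \<Rightarrow> 'a vec3" where
  "vscale c v = (case v of (x, y, z) \<Rightarrow> (c * x, c * y, c * z))"

definition vadd :: "'a::field vec3 \<Rightarrow> 'a vec3 \<Rightarrow> 'a vec3" where
  "vadd v w = (case v of (x, y, z) \<Rightarrow> case w of (x', y', z') \<Rightarrow> (x + x', y + y', z + z'))"

definition vdot :: "'a::field vec3 \<Rightarrow> 'a vec3 \<Rightarrow> 'a" where
  "vdot v w = (case v of (x, y, z) \<Rightarrow> case w of (x', y', z') \<Rightarrow> x * x' + y * y' + z * z')"

text \<open>A point of P^2(F) is a one-dimensional subspace of F^3 with zero removed,
  i.e. the set of all nonzero multiples of a nonzero vector.
  Lines are represented likewise by their (dual) homogeneous coordinates.\<close>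

typedef (overloaded) 'a ppoint =
  "{S :: ('a::field) vec3 set. \<exists>v. v \<noteq> vzero \<and> S = {vscale c v | c. c \<noteq> 0}}"
  by (rule exI[of _ "{vscale c (1, 0, 0) | c. c \<noteq> 0}"], rule CollectI, rule exI[of _ "(1, 0, 0)"]) (simp add: vzero_def)

typedef (overloaded) 'a pline =
  "{S :: ('a::field) vec3 set. \<exists>v. v \<noteq> vzero \<and> S = {vscale c v | c. c \<noteq> 0}}"
  by (rule exI[of _ "{vscale c (1, 0, 0) | c. c \<noteq> 0}"], rule CollectI, rule exI[of _ "(1, 0, 0)"]) (simp add: vzero_def)

definition incid :: "'a::field ppoint \<Rightarrow> 'a pline \<Rightarrow> bool" where
  "incid P l \<longleftrightarrow> (\<exists>v w. v \<in> Rep_ppoint P \<and> w \<in> Rep_pline l \<and> vdot v w = 0)"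

definition join :: "'a::field ppoint \<Rightarrow> 'a ppoint \<Rightarrow> 'a pline" where
  "join P Q = (THE l. incid P l \<and> incid Q l)"

definition meet :: "'a::field pline \<Rightarrow> 'a pline \<Rightarrow> 'a ppoint" where
  "meet l m = (THE P. incid P l \<and> incid P m)"

definition collinear4 :: "'a::field ppoint \<Rightarrow> 'a ppoint \<Rightarrow> 'a ppoint \<Rightarrow> 'a ppoint \<Rightarrow> bool" where
  "collinear4 A B C D \<longleftrightarrow> (\<exists>l. incid A l \<and> incid B l \<and> incid C l \<and> incid D l)"

definition concurrent4 :: "'a::field pline \<Rightarrow> 'a pline \<Rightarrow> 'a pline \<Rightarrow> 'a pline \<Rightarrow> bool" where
  "concurrent4 a b c d \<longleftrightarrow> (\<exists>P. incid P a \<and> incid P b \<and> incid P c \<and> incid P d)"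

text \<open>Cross-ratio (A,B;C,D) of four distinct collinear points: choosing representatives
  a, b of A, B, write C = [a + l b], D = [a + m b]; then (A,B;C,D) = l / m.
  (In the affine parameter t of [a + t b] this is the classical
  ((C-A)(D-B))/((C-B)(D-A)) with A at 0 and B at infinity.)\<close>
definition cross_ratio :: "'a::field ppoint \<Rightarrow> 'a ppoint \<Rightarrow> 'a ppoint \<Rightarrow> 'a ppoint \<Rightarrow> 'a" where
  "cross_ratio A B C D = (THE r. \<exists>a b l m. a \<in> Rep_ppoint A \<and> b \<in> Rep_ppoint B \<and>
       vadd a (vscale l b) \<in> Rep_ppoint C \<and> vadd a (vscale m b) \<in> Rep_ppoint D \<and>
       m \<noteq> 0 \<and> r = l / m)"

text \<open>Harmonic set A, C, B, D with conjugate pairs {A,B} and {C,D}.\<close>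
definition harmonic_set :: "'a::field ppoint \<Rightarrow> 'a ppoint \<Rightarrow> 'a ppoint \<Rightarrow> 'a ppoint \<Rightarrow> bool" where
  "harmonic_set A C B D \<longleftrightarrow> distinct [A, C, B, D] \<and> collinear4 A C B D \<and> cross_ratio A B C D = -1"

definition harm_conj :: "'a::field ppoint \<Rightarrow> 'a ppoint \<Rightarrow> 'a ppoint \<Rightarrow> 'a ppoint" where
  "harm_conj A B C = (THE D. harmonic_set A C B D)"

definition harmonic_pencil :: "'a::field pline \<Rightarrow> 'a pline \<Rightarrow> 'a pline \<Rightarrow> 'a pline \<Rightarrow> bool" where
  "harmonic_pencil l1 l3 l2 l4 \<longleftrightarrow> distinct [l1, l3, l2, l4] \<and> concurrent4 l1 l3 l2 l4 \<and>
     (\<exists>t. \<not> incid (meet l1 l2) t \<and>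
          harmonic_set (meet t l1) (meet t l3) (meet t l2) (meet t l4))"

definition harm_conj_line :: "'a::field pline \<Rightarrow> 'a pline \<Rightarrow> 'a pline \<Rightarrow> 'a pline" where
  "harm_conj_line l1 l2 l3 = (THE l4. harmonic_pencil l1 l3 l2 l4)"

text \<open>rho_{A,B} on the line A \<or> B (maps act on the right: X . rho).\<close>
definition rho_line :: "'a::field ppoint \<Rightarrow> 'a ppoint \<Rightarrow> 'a ppoint \<Rightarrow> 'a ppoint" where
  "rho_line A B X = (if X = A \<or> X = B then X else harm_conj A B X)"

definition rho_refl :: "'a::field ppoint \<Rightarrow> 'a pline \<Rightarrow> 'a ppoint \<Rightarrow> 'a ppoint" where
  "rho_refl P m X = (if X = P \<or> incid X m then X else harm_conj P (meet (join X P) m) X)"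

definition general_position :: "'a::field ppoint \<Rightarrow> 'a ppoint \<Rightarrow> 'a ppoint \<Rightarrow> 'a ppoint \<Rightarrow> bool" where
  "general_position A C B D \<longleftrightarrow> distinct [A, C, B, D] \<and>
     (\<forall>P\<in>{A, C, B, D}. \<forall>Q\<in>{A, C, B, D}. \<forall>R\<in>{A, C, B, D}.
        distinct [P, Q, R] \<longrightarrow> \<not> (\<exists>l. incid P l \<and> incid Q l \<and> incid R l))"

definition harmonic_curve :: "'a::field ppoint \<Rightarrow> 'a ppoint \<Rightarrow> 'a ppoint \<Rightarrow> 'a ppoint \<Rightarrow> 'a ppoint set" where
  "harmonic_curve A C B D = {A, C, B, D} \<union>
     {Z. Z \<notin> {A, B, C, D} \<and> distinct [join Z A, join Z C, join Z B, join Z D] \<and>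
         harmonic_pencil (join Z A) (join Z C) (join Z B) (join Z D)}"

definition tangent_at :: "'a::field ppoint \<Rightarrow> 'a ppoint \<Rightarrow> 'a ppoint \<Rightarrow> 'a ppoint \<Rightarrow> 'a pline" where
  "tangent_at A C B D = harm_conj_line (join A C) (join D A) (join A B)"

end

theory Submission
  imports Defs
begin

definition vcross :: "'a::field vec3 \<Rightarrow> 'a vec3 \<Rightarrow> 'a vec3" where
  "vcross v w = (case v of (x, y, z) \<Rightarrow> case w of (x', y', z') \<Rightarrow>
      (y * z' - z * y', z * x' - x * z', x * y' - y * x'))"

definition lc :: "'a::field \<Rightarrow> 'a vec3 \<Rightarrow> 'a \<Rightarrow> 'a vec3 \<Rightarrow> 'a vec3" where
  "lc s v t w = vadd (vscale s v) (vscale t w)"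

definition pp :: "'a::field vec3 \<Rightarrow> 'a ppoint" where
  "pp v = Abs_ppoint {vscale c v | c. c \<noteq> 0}"

definition ll :: "'a::field vec3 \<Rightarrow> 'a pline" where
  "ll v = Abs_pline {vscale c v | c. c \<noteq> 0}"

lemma vsimps[simp]:
  "vadd (a1, a2, a3) (b1, b2, b3) = (a1 + b1, a2 + b2, a3 + b3)"
  "vscale k (a1, a2, a3) = (k * a1, k * a2, k * a3)"
  "vdot (a1, a2, a3) (b1, b2, b3) = a1 * b1 + a2 * b2 + a3 * b3"
  "vcross (a1, a2, a3) (b1, b2, b3) = (a2 * b3 - a3 * b2, a3 * b1 - a1 * b3, a1 * b2 - a2 * b1)"
  "lc s (a1, a2, a3) t (b1, b2, b3) = (s * a1 + t * b1, s * a2 + t * b2, s * a3 + t * b3)"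
  "vzero = (0, 0, 0)"
  by (simp_all add: vadd_def vscale_def vdot_def vcross_def lc_def vzero_def)

lemma par_ex:
  fixes v w :: "'a::field vec3"
  assumes "v \<noteq> vzero" "vcross v w = vzero"
  shows "\<exists>k. w = vscale k v"
proof -
  obtain v1 v2 v3 where v: "v = (v1, v2, v3)" by (cases v)
  obtain w1 w2 w3 where w: "w = (w1, w2, w3)" by (cases w)
  have e: "v2 * w3 = v3 * w2" "v3 * w1 = v1 * w3" "v1 * w2 = v2 * w1"
    using assms(2) by (auto simp: v w)
  show ?thesis
  proof (cases "v1 = 0")
    case False
    show ?thesis
      by (rule exI[of _ "w1 / v1"]) (use False e in \<open>auto simp: v w field_simps\<close>)
  next
    case z1: True
    show ?thesis
    proof (cases "v2 = 0")
      case False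
      show ?thesis
        by (rule exI[of _ "w2 / v2"]) (use False e z1 in \<open>auto simp: v w field_simps\<close>)
    next
      case True
      then have "v3 \<noteq> 0" using z1 assms(1) v by auto
      then show ?thesis
        by (intro exI[of _ "w3 / v3"]) (use True e z1 in \<open>auto simp: v w field_simps\<close>)
    qed
  qed
qed

lemma scale_mem: "c \<noteq> 0 \<Longrightarrow> vscale c v \<in> {vscale c v |c. c \<noteq> 0}"
  by blast

lemma self_mem: "v \<in> {vscale c v |c. c \<noteq> 0}"
proof -
  have "v = vscale 1 v" by (cases v) simp
  then show ?thesis using scale_mem[of 1 v] by simp
qed

lemma scale_one[simp]: "vscale 1 v = v"
  by (cases v) simp

lemma scale_scale: "vscale c (vscale d v) = vscale (c * d) v"
  by (cases v) (simp add: mult.assoc)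

lemma ray_eq:
  fixes v w :: "'a::field vec3"
  assumes "v \<noteq> vzero" "w \<noteq> vzero"
  shows "({vscale c v |c. c \<noteq> 0} = {vscale c w |c. c \<noteq> 0}) \<longleftrightarrow> vcross v w = vzero"
proof
  assume h: "{vscale c v |c. c \<noteq> 0} = {vscale c w |c. c \<noteq> 0}"
  have "w \<in> {vscale c v |c. c \<noteq> 0}" using h self_mem[of w] by simp
  then obtain c where "w = vscale c v" by blast
  then show "vcross v w = vzero"
    by (cases v) (simp add: algebra_simps)
next
  assume h: "vcross v w = vzero"
  obtain k where k: "w = vscale k v" using par_ex[OF assms(1) h] by blast
  have k0: "k \<noteq> 0" using assms(2) k by (cases v) auto
  have vk: "v = vscale (1 / k) w" using k k0 by (simp add: scale_scale)
  show "{vscale c v |c. c \<noteq> 0} = {vscale c w |c. c \<noteq> 0}"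
  proof (intro set_eqI iffI)
    fix x assume "x \<in> {vscale c v |c. c \<noteq> 0}"
    then obtain c where c: "c \<noteq> 0" "x = vscale c v" by blast
    have "x = vscale (c / k) w" using c vk by (simp add: scale_scale)
    then show "x \<in> {vscale c w |c. c \<noteq> 0}" using c k0 scale_mem[of "c/k" w] by simp
  next
    fix x assume "x \<in> {vscale c w |c. c \<noteq> 0}"
    then obtain c where c: "c \<noteq> 0" "x = vscale c w" by blast
    have "x = vscale (c * k) v" using c k by (simp add: scale_scale)
    then show "x \<in> {vscale c v |c. c \<noteq> 0}" using c k0 scale_mem[of "c*k" v] by simp
  qed
qed

lemma Rep_pp: "v \<noteq> vzero \<Longrightarrow> Rep_ppoint (pp v) = {vscale c v |c. c \<noteq> 0}"
  unfolding pp_def by (rule Abs_ppoint_inverse) blast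

lemma Rep_ll: "v \<noteq> vzero \<Longrightarrow> Rep_pline (ll v) = {vscale c v |c. c \<noteq> 0}"
  unfolding ll_def by (rule Abs_pline_inverse) blast

lemma pp_surj: "\<exists>v. v \<noteq> vzero \<and> P = pp v"
proof -
  obtain v where v: "v \<noteq> vzero" and e: "Rep_ppoint P = {vscale c v |c. c \<noteq> 0}"
    using Rep_ppoint[of P] by blast
  have "P = Abs_ppoint (Rep_ppoint P)" by (rule Rep_ppoint_inverse[symmetric])
  also have "\<dots> = pp v" unfolding pp_def e by (rule refl)
  finally show ?thesis using v by blast
qed

lemma ll_surj: "\<exists>v. v \<noteq> vzero \<and> l = ll v"
proof -
  obtain v where v: "v \<noteq> vzero" and e: "Rep_pline l = {vscale c v |c. c \<noteq> 0}"
    using Rep_pline[of l] by blast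
  have "l = Abs_pline (Rep_pline l)" by (rule Rep_pline_inverse[symmetric])
  also have "\<dots> = ll v" unfolding ll_def e by (rule refl)
  finally show ?thesis using v by blast
qed

lemma pp_eq: "v \<noteq> vzero \<Longrightarrow> w \<noteq> vzero \<Longrightarrow> pp v = pp w \<longleftrightarrow> vcross v w = vzero"
  unfolding pp_def by (subst Abs_ppoint_inject) (blast, blast, rule ray_eq)

lemma ll_eq: "v \<noteq> vzero \<Longrightarrow> w \<noteq> vzero \<Longrightarrow> ll v = ll w \<longleftrightarrow> vcross v w = vzero"
  unfolding ll_def by (subst Abs_pline_inject) (blast, blast, rule ray_eq)


lemma incid_pp_ll: "v \<noteq> vzero \<Longrightarrow> w \<noteq> vzero \<Longrightarrow> incid (pp v) (ll w) \<longleftrightarrow> vdot v w = 0"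
proof -
  assume v: "v \<noteq> vzero" and w: "w \<noteq> vzero"
  obtain v1 v2 v3 where vv: "v = (v1, v2, v3)" by (cases v)
  obtain w1 w2 w3 where ww: "w = (w1, w2, w3)" by (cases w)
  show ?thesis
  proof
    assume "incid (pp v) (ll w)"
    then obtain c d where "c \<noteq> 0" "d \<noteq> 0" "vdot (vscale c v) (vscale d w) = 0"
      unfolding incid_def Rep_pp[OF v] Rep_ll[OF w] by blast
    moreover have "vdot (vscale c v) (vscale d w) = c * d * vdot v w"
      by (simp add: vv ww algebra_simps)
    ultimately show "vdot v w = 0" by simp
  next
    assume "vdot v w = 0"
    moreover have "v \<in> {vscale c v |c. c \<noteq> 0}"
      by (rule CollectI, rule exI[of _ 1]) (simp add: vv)
    moreover have "w \<in> {vscale c w |c. c \<noteq> 0}"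
      by (rule CollectI, rule exI[of _ 1]) (simp add: ww)
    ultimately show "incid (pp v) (ll w)"
      unfolding incid_def Rep_pp[OF v] Rep_ll[OF w] by (intro exI[of _ v] exI[of _ w] conjI)
  qed
qed


lemma vdot_comm: "vdot v w = vdot w v"
  by (cases v, cases w) (simp add: algebra_simps)

lemma cross_anti: "vcross w v = vscale (-1) (vcross v w)"
  by (cases v, cases w) (simp add: algebra_simps)

lemma dot_cross1[simp]: "vdot v (vcross v w) = 0"
  by (cases v, cases w) (simp add: algebra_simps)
lemma dot_cross2[simp]: "vdot w (vcross v w) = 0"
  by (cases v, cases w) (simp add: algebra_simps)
lemma dot_cross3[simp]: "vdot (vcross v w) v = 0"
  by (cases v, cases w) (simp add: algebra_simps)
lemma dot_cross4[simp]: "vdot (vcross v w) w = 0"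
  by (cases v, cases w) (simp add: algebra_simps)

lemma cross_lc: "vcross (lc a p b q) (lc c p d q) = vscale (a * d - b * c) (vcross p q)"
  by (cases p, cases q) (simp add: algebra_simps)
lemma cross_lc1: "vcross p (lc c p d q) = vscale d (vcross p q)"
  by (cases p, cases q) (simp add: algebra_simps)
lemma cross_lc2: "vcross q (lc c p d q) = vscale (- c) (vcross p q)"
  by (cases p, cases q) (simp add: algebra_simps)
lemma cross_lc3: "vcross (lc a p b q) p = vscale (- b) (vcross p q)"
  by (cases p, cases q) (simp add: algebra_simps)
lemma cross_lc4: "vcross (lc a p b q) q = vscale a (vcross p q)"
  by (cases p, cases q) (simp add: algebra_simps)
lemma cross_lin: "vcross t (lc a l b m) = lc a (vcross t l) b (vcross t m)"
  by (cases t, cases l, cases m) (simp add: algebra_simps)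
lemma dot_lc: "vdot (lc a p b q) w = a * vdot p w + b * vdot q w"
  by (cases p, cases q, cases w) (simp add: algebra_simps)
lemma cross_cross: "vcross u (vcross v w) = lc (vdot u w) v (- vdot u v) w"
  by (cases u, cases v, cases w) (simp add: algebra_simps)
lemma cross_cross2: "vcross (vcross t l) (vcross t m) = vscale (vdot t (vcross l m)) t"
  by (cases t, cases l, cases m) (simp add: algebra_simps)
lemma scale_zero_iff: "vscale c v = (0,0,0) \<longleftrightarrow> c = 0 \<or> v = vzero"
  by (cases v) auto
lemma cross_zero1[simp]: "vcross (0,0,0) v = (0,0,0)" by (cases v) simp
lemma cross_zero2[simp]: "vcross v (0,0,0) = (0,0,0)" by (cases v) simp
lemma cross_scale_self: "vcross (vscale c v) v = vzero" by (cases v) (simp add: algebra_simps)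

lemma cross_nz: "vcross p q \<noteq> vzero \<Longrightarrow> p \<noteq> vzero \<and> q \<noteq> vzero"
  by auto

lemma lc_indep:
  assumes "vcross p q \<noteq> vzero" "lc s p t q = vzero" shows "s = 0 \<and> t = 0"
proof -
  have "vcross (lc s p t q) q = vzero" using assms(2) by simp
  then have "s = 0" using assms(1) by (simp add: cross_lc4 scale_zero_iff)
  moreover have "vcross p (lc s p t q) = vzero" using assms(2) by simp
  then have "t = 0" using assms(1) by (simp add: cross_lc1 scale_zero_iff)
  ultimately show ?thesis by simp
qed

lemma lc_nz: "vcross p q \<noteq> vzero \<Longrightarrow> s \<noteq> 0 \<or> t \<noteq> 0 \<Longrightarrow> lc s p t q \<noteq> vzero"
  using lc_indep by blast

lemma scale_nz: "c \<noteq> 0 \<Longrightarrow> v \<noteq> vzero \<Longrightarrow> vscale c v \<noteq> vzero"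
  by (simp add: scale_zero_iff)

lemma pp_scale: "c \<noteq> 0 \<Longrightarrow> v \<noteq> vzero \<Longrightarrow> pp (vscale c v) = pp v"
  by (subst pp_eq) (auto simp: scale_nz cross_scale_self simp del: vsimps)
lemma ll_scale: "c \<noteq> 0 \<Longrightarrow> v \<noteq> vzero \<Longrightarrow> ll (vscale c v) = ll v"
  by (subst ll_eq) (auto simp: scale_nz cross_scale_self simp del: vsimps)

lemma lc_div:
  fixes n :: "'a::field"
  assumes "n \<noteq> 0" "n * c1 = X * p1 + Y * q1" "n * c2 = X * p2 + Y * q2" "n * c3 = X * p3 + Y * q3"
  shows "(c1, c2, c3) = lc (X / n) (p1, p2, p3) (Y / n) (q1, q2, q3)"
  using assms by (simp add: field_simps)

lemma span3:
  fixes c p q :: "'a::field vec3"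
  assumes h: "vdot c (vcross p q) = 0" and n: "vcross p q \<noteq> vzero"
  shows "\<exists>s t. c = lc s p t q"
proof -
  obtain p1 p2 p3 where p: "p = (p1, p2, p3)" by (cases p)
  obtain q1 q2 q3 where q: "q = (q1, q2, q3)" by (cases q)
  obtain c1 c2 c3 where c: "c = (c1, c2, c3)" by (cases c)
  have h': "c1 * (p2 * q3 - p3 * q2) + c2 * (p3 * q1 - p1 * q3) + c3 * (p1 * q2 - p2 * q1) = 0"
    using h by (simp add: p q c)
  consider "p2 * q3 - p3 * q2 \<noteq> 0" | "p3 * q1 - p1 * q3 \<noteq> 0" | "p1 * q2 - p2 * q1 \<noteq> 0"
    using n by (auto simp: p q)
  then show ?thesis
  proof cases
    case 1
    have "(c1, c2, c3) = lc ((c2 * q3 - c3 * q2) / (p2 * q3 - p3 * q2)) (p1, p2, p3)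
               ((p2 * c3 - p3 * c2) / (p2 * q3 - p3 * q2)) (q1, q2, q3)"
      by (rule lc_div[OF 1]) ((simp add: algebra_simps; fail) | (use h' in algebra))+
    then show ?thesis using p q c by blast
  next
    case 2
    have "(c1, c2, c3) = lc ((c3 * q1 - c1 * q3) / (p3 * q1 - p1 * q3)) (p1, p2, p3)
               ((p3 * c1 - p1 * c3) / (p3 * q1 - p1 * q3)) (q1, q2, q3)"
      by (rule lc_div[OF 2]) ((simp add: algebra_simps; fail) | (use h' in algebra))+
    then show ?thesis using p q c by blast
  next
    case 3
    have "(c1, c2, c3) = lc ((c1 * q2 - c2 * q1) / (p1 * q2 - p2 * q1)) (p1, p2, p3)
               ((p1 * c2 - p2 * c1) / (p1 * q2 - p2 * q1)) (q1, q2, q3)"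
      by (rule lc_div[OF 3]) ((simp add: algebra_simps; fail) | (use h' in algebra))+
    then show ?thesis using p q c by blast
  qed
qed


lemma lc00: "lc 0 v 0 w = vzero" by (cases v, cases w) simp
lemma cross_zero1'[simp]: "vcross vzero v = vzero" by (cases v) simp
lemma cross_zero2'[simp]: "vcross v vzero = vzero" by (cases v) simp
lemma scale_zero_iff': "vscale c v = vzero \<longleftrightarrow> c = 0 \<or> v = vzero"
  by (cases v) auto
declare vsimps[simp del]

lemma line_unique:
  assumes "incid (pp v) l" "incid (pp w) l" "vcross v w \<noteq> vzero"
  shows "l = ll (vcross v w)"
proof -
  have v: "v \<noteq> vzero" and w: "w \<noteq> vzero" using cross_nz[OF assms(3)] by auto
  obtain m where m: "m \<noteq> vzero" "l = ll m" using ll_surj by blast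
  have "vdot v m = 0" "vdot w m = 0" using assms(1,2) m
    by (simp_all add: incid_pp_ll[OF v m(1)] incid_pp_ll[OF w m(1)])
  then have "vcross m (vcross v w) = vzero" by (simp add: cross_cross vdot_comm[of m] lc00)
  then show ?thesis using m ll_eq[OF m(1) assms(3)] by simp
qed

lemma point_unique:
  assumes "incid P (ll v)" "incid P (ll w)" "vcross v w \<noteq> vzero"
  shows "P = pp (vcross v w)"
proof -
  have v: "v \<noteq> vzero" and w: "w \<noteq> vzero" using cross_nz[OF assms(3)] by auto
  obtain m where m: "m \<noteq> vzero" "P = pp m" using pp_surj by blast
  have "vdot m v = 0" "vdot m w = 0" using assms(1,2) m
    by (simp_all add: incid_pp_ll[OF m(1) v] incid_pp_ll[OF m(1) w])
  then have "vcross m (vcross v w) = vzero" by (simp add: cross_cross lc00)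
  then show ?thesis using m pp_eq[OF m(1) assms(3)] by simp
qed

lemma join_pp:
  assumes "vcross v w \<noteq> vzero"
  shows "join (pp v) (pp w) = ll (vcross v w)"
proof -
  have v: "v \<noteq> vzero" and w: "w \<noteq> vzero" using cross_nz[OF assms] by auto
  show ?thesis unfolding join_def
  proof (rule the_equality)
    show "incid (pp v) (ll (vcross v w)) \<and> incid (pp w) (ll (vcross v w))"
      using incid_pp_ll[OF v assms] incid_pp_ll[OF w assms] by simp
  next
    fix l assume "incid (pp v) l \<and> incid (pp w) l"
    then show "l = ll (vcross v w)" using line_unique assms by blast
  qed
qed

lemma meet_ll:
  assumes "vcross v w \<noteq> vzero"
  shows "meet (ll v) (ll w) = pp (vcross v w)"
proof -
  have v: "v \<noteq> vzero" and w: "w \<noteq> vzero" using cross_nz[OF assms] by auto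
  show ?thesis unfolding meet_def
  proof (rule the_equality)
    show "incid (pp (vcross v w)) (ll v) \<and> incid (pp (vcross v w)) (ll w)"
      using incid_pp_ll[OF assms v] incid_pp_ll[OF assms w] by simp
  next
    fix P assume "incid P (ll v) \<and> incid P (ll w)"
    then show "P = pp (vcross v w)" using point_unique assms by blast
  qed
qed

lemma comp_lemma:
  assumes "vadd (vscale c1 p) (vscale l (vscale c2 q)) = vscale k (lc a p b q)"
  shows "lc (c1 - k * a) p (l * c2 - k * b) q = vzero"
proof -
  obtain p1 p2 p3 where p: "p = (p1, p2, p3)" by (cases p)
  obtain q1 q2 q3 where q: "q = (q1, q2, q3)" by (cases q)
  show ?thesis using assms by (simp add: vsimps p q algebra_simps)
qed

lemma cr:
  assumes n: "vcross p q \<noteq> vzero" and a3: "a3 \<noteq> 0" and a4: "a4 \<noteq> 0" and b4: "b4 \<noteq> 0"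
  shows "cross_ratio (pp p) (pp q) (pp (lc a3 p b3 q)) (pp (lc a4 p b4 q)) = b3 * a4 / (a3 * b4)"
proof -
  have p: "p \<noteq> vzero" and q: "q \<noteq> vzero" using cross_nz[OF n] by auto
  have l3: "lc a3 p b3 q \<noteq> vzero" using lc_nz[OF n] a3 by blast
  have l4: "lc a4 p b4 q \<noteq> vzero" using lc_nz[OF n] a4 by blast
  show ?thesis unfolding cross_ratio_def Rep_pp[OF p] Rep_pp[OF q] Rep_pp[OF l3] Rep_pp[OF l4]
  proof (rule the_equality)
    have e3: "vadd p (vscale (b3 / a3) q) = vscale (1 / a3) (lc a3 p b3 q)"
      using a3 by (cases p, cases q) (simp add: vsimps field_simps)
    have e4: "vadd p (vscale (b4 / a4) q) = vscale (1 / a4) (lc a4 p b4 q)"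
      using a4 by (cases p, cases q) (simp add: vsimps field_simps)
    have pm: "p \<in> {vscale c p |c. c \<noteq> 0}" "q \<in> {vscale c q |c. c \<noteq> 0}" by (rule self_mem)+
    have m3: "vadd p (vscale (b3 / a3) q) \<in> {vscale c (lc a3 p b3 q) |c. c \<noteq> 0}"
      unfolding e3 using a3 by (intro scale_mem) simp
    have m4: "vadd p (vscale (b4 / a4) q) \<in> {vscale c (lc a4 p b4 q) |c. c \<noteq> 0}"
      unfolding e4 using a4 by (intro scale_mem) simp
    have m0: "b4 / a4 \<noteq> 0" using a4 b4 by simp
    have r: "b3 * a4 / (a3 * b4) = (b3 / a3) / (b4 / a4)" using a3 a4 b4 by (simp add: field_simps)
    show "\<exists>a b l m. a \<in> {vscale c p |c. c \<noteq> 0} \<and> b \<in> {vscale c q |c. c \<noteq> 0} \<and>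
          vadd a (vscale l b) \<in> {vscale c (lc a3 p b3 q) |c. c \<noteq> 0} \<and>
          vadd a (vscale m b) \<in> {vscale c (lc a4 p b4 q) |c. c \<noteq> 0} \<and> m \<noteq> 0 \<and>
          b3 * a4 / (a3 * b4) = l / m"
      using pm m3 m4 m0 r by blast
  next
    fix r assume "\<exists>a b l m. a \<in> {vscale c p |c. c \<noteq> 0} \<and> b \<in> {vscale c q |c. c \<noteq> 0} \<and>
          vadd a (vscale l b) \<in> {vscale c (lc a3 p b3 q) |c. c \<noteq> 0} \<and>
          vadd a (vscale m b) \<in> {vscale c (lc a4 p b4 q) |c. c \<noteq> 0} \<and> m \<noteq> 0 \<and> r = l / m"
    then obtain c1 c2 l m k k' where c1: "c1 \<noteq> 0" and c2: "c2 \<noteq> 0" and m: "m \<noteq> 0"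
      and r: "r = l / m"
      and h3: "vadd (vscale c1 p) (vscale l (vscale c2 q)) = vscale k (lc a3 p b3 q)"
      and h4: "vadd (vscale c1 p) (vscale m (vscale c2 q)) = vscale k' (lc a4 p b4 q)"
      by blast
    have "c1 - k * a3 = 0 \<and> l * c2 - k * b3 = 0" using lc_indep[OF n comp_lemma[OF h3]] .
    moreover have "c1 - k' * a4 = 0 \<and> m * c2 - k' * b4 = 0" using lc_indep[OF n comp_lemma[OF h4]] .
    ultimately have e: "c1 = k * a3" "l * c2 = k * b3" "c1 = k' * a4" "m * c2 = k' * b4" by auto
    have "k = c1 / a3" "k' = c1 / a4" using e a3 a4 by (auto simp: field_simps)
    then have L: "l = c1 * b3 / (a3 * c2)" and M: "m = c1 * b4 / (a4 * c2)" using e c2 a3 a4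
      by (auto simp: field_simps)
    have "r = (c1 * b3 / (a3 * c2)) / (c1 * b4 / (a4 * c2))" unfolding r L M ..
    also have "\<dots> = b3 * a4 / (a3 * b4)" using c1 c2 a3 a4 b4 by (simp add: field_simps)
    finally show "r = b3 * a4 / (a3 * b4)" .
  qed
qed


lemma lc_nz2: "vcross p q \<noteq> vzero \<Longrightarrow> a * d - b * c \<noteq> 0 \<Longrightarrow> lc a p b q \<noteq> vzero \<and> lc c p d q \<noteq> vzero"
proof -
  assume n: "vcross p q \<noteq> vzero" and h: "a * d - b * c \<noteq> 0"
  have "a \<noteq> 0 \<or> b \<noteq> 0" using h by (cases "a = 0") auto
  moreover have "c \<noteq> 0 \<or> d \<noteq> 0" using h by (cases "c = 0") auto
  ultimately show ?thesis using lc_nz[OF n] by blast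
qed

lemma lc10: "lc 1 p 0 q = p" by (cases p, cases q) (simp add: vsimps)
lemma lc01: "lc 0 p 1 q = q" by (cases p, cases q) (simp add: vsimps)

lemma nz_scale_cross: "vcross p q \<noteq> vzero \<Longrightarrow> vscale c (vcross p q) = vzero \<longleftrightarrow> c = 0"
  by (simp add: scale_zero_iff')

lemma pp_ne1: "vcross p q \<noteq> vzero \<Longrightarrow> b \<noteq> 0 \<Longrightarrow> pp p \<noteq> pp (lc a p b q)"
  using pp_eq[of p "lc a p b q"] lc_nz[of p q a b] cross_nz[of p q] by (simp add: cross_lc1 nz_scale_cross)
lemma pp_ne2: "vcross p q \<noteq> vzero \<Longrightarrow> a \<noteq> 0 \<Longrightarrow> pp q \<noteq> pp (lc a p b q)"
  using pp_eq[of q "lc a p b q"] lc_nz[of p q a b] cross_nz[of p q] by (simp add: cross_lc2 nz_scale_cross)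
lemma pp_ne3: "vcross p q \<noteq> vzero \<Longrightarrow> pp p \<noteq> pp q"
  using pp_eq[of p q] cross_nz[of p q] by simp
lemma pp_eq_lc: "vcross p q \<noteq> vzero \<Longrightarrow> a \<noteq> 0 \<or> b \<noteq> 0 \<Longrightarrow> c \<noteq> 0 \<or> d \<noteq> 0 \<Longrightarrow>
   pp (lc a p b q) = pp (lc c p d q) \<longleftrightarrow> a * d - b * c = 0"
  using pp_eq[of "lc a p b q" "lc c p d q"] lc_nz[of p q a b] lc_nz[of p q c d]
  by (simp add: cross_lc nz_scale_cross)

lemma ll_ne1: "vcross p q \<noteq> vzero \<Longrightarrow> b \<noteq> 0 \<Longrightarrow> ll p \<noteq> ll (lc a p b q)"
  using ll_eq[of p "lc a p b q"] lc_nz[of p q a b] cross_nz[of p q] by (simp add: cross_lc1 nz_scale_cross)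
lemma ll_ne2: "vcross p q \<noteq> vzero \<Longrightarrow> a \<noteq> 0 \<Longrightarrow> ll q \<noteq> ll (lc a p b q)"
  using ll_eq[of q "lc a p b q"] lc_nz[of p q a b] cross_nz[of p q] by (simp add: cross_lc2 nz_scale_cross)
lemma ll_ne3: "vcross p q \<noteq> vzero \<Longrightarrow> ll p \<noteq> ll q"
  using ll_eq[of p q] cross_nz[of p q] by simp
lemma ll_eq_lc: "vcross p q \<noteq> vzero \<Longrightarrow> a \<noteq> 0 \<or> b \<noteq> 0 \<Longrightarrow> c \<noteq> 0 \<or> d \<noteq> 0 \<Longrightarrow>
   ll (lc a p b q) = ll (lc c p d q) \<longleftrightarrow> a * d - b * c = 0"
  using ll_eq[of "lc a p b q" "lc c p d q"] lc_nz[of p q a b] lc_nz[of p q c d]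
  by (simp add: cross_lc nz_scale_cross)

lemma incid_lc: "vcross p q \<noteq> vzero \<Longrightarrow> a \<noteq> 0 \<or> b \<noteq> 0 \<Longrightarrow> incid (pp (lc a p b q)) (ll (vcross p q))"
  using incid_pp_ll[of "lc a p b q" "vcross p q"] lc_nz[of p q a b] by (simp add: dot_lc)

lemma harm_iff:
  assumes two: "(2::'a::field) \<noteq> 0" and n: "vcross p q \<noteq> (vzero :: 'a vec3)"
    and a: "a \<noteq> 0" and b: "b \<noteq> 0" and d: "d \<noteq> vzero"
  shows "harmonic_set (pp p) (pp (lc a p b q)) (pp q) (pp d) \<longleftrightarrow> pp d = pp (lc a p (- b) q)"
proof
  assume "pp d = pp (lc a p (- b) q)"
  then have D: "pp d = pp (lc a p (- b) q)" .
  have p: "p \<noteq> vzero" and q: "q \<noteq> vzero" using cross_nz[OF n] by auto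
  have "a * (- b) - b * a = - (2 * (a * b))" by (simp add: algebra_simps)
  then have "a * (- b) - b * a \<noteq> 0" using two a b by simp
  then have ne: "pp (lc a p b q) \<noteq> pp (lc a p (- b) q)" using pp_eq_lc[OF n] a by simp
  have dist: "distinct [pp p, pp (lc a p b q), pp q, pp (lc a p (- b) q)]"
    using pp_ne1[OF n b, of a] pp_ne1[OF n, of "-b" a] pp_ne2[OF n a, of b, THEN not_sym]
      pp_ne2[OF n a, of "-b"] pp_ne3[OF n] a b ne by auto
  have col: "collinear4 (pp p) (pp (lc a p b q)) (pp q) (pp (lc a p (- b) q))"
    unfolding collinear4_def
    apply (rule exI[of _ "ll (vcross p q)"])
    using incid_lc[OF n, of 1 0] incid_lc[OF n, of 0 1] incid_lc[OF n, of a b] incid_lc[OF n, of a "-b"] a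
    by (simp add: lc10 lc01)
  have "cross_ratio (pp p) (pp q) (pp (lc a p b q)) (pp (lc a p (- b) q)) = b * a / (a * - b)"
    by (rule cr[OF n a a]) (use b in simp)
  also have "\<dots> = -1" using a b by (simp add: field_simps)
  finally show "harmonic_set (pp p) (pp (lc a p b q)) (pp q) (pp d)"
    unfolding harmonic_set_def D using dist col by simp
next
  assume h: "harmonic_set (pp p) (pp (lc a p b q)) (pp q) (pp d)"
  then obtain l where l: "incid (pp p) l" "incid (pp q) l" "incid (pp d) l"
    unfolding harmonic_set_def collinear4_def by blast
  have L: "l = ll (vcross p q)" using line_unique[OF l(1,2) n] .
  have "vdot d (vcross p q) = 0" using l(3) incid_pp_ll[OF d n] L by simp
  then obtain g k where dg: "d = lc g p k q" using span3[OF _ n] by blast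
  have "pp d \<noteq> pp q" "pp d \<noteq> pp p" using h unfolding harmonic_set_def by auto
  have g: "g \<noteq> 0"
  proof
    assume "g = 0"
    then have "vcross q d = vzero" unfolding dg by (simp add: cross_lc2 scale_zero_iff')
    then have "pp q = pp d" using pp_eq[OF _ d, of q] cross_nz[OF n] by simp
    then show False using `pp d \<noteq> pp q` by simp
  qed
  have k: "k \<noteq> 0"
  proof
    assume "k = 0"
    then have "vcross p d = vzero" unfolding dg by (simp add: cross_lc1 scale_zero_iff')
    then have "pp p = pp d" using pp_eq[OF _ d, of p] cross_nz[OF n] by simp
    then show False using `pp d \<noteq> pp p` by simp
  qed
  have "cross_ratio (pp p) (pp q) (pp (lc a p b q)) (pp (lc g p k q)) = b * g / (a * k)"
    by (rule cr[OF n a g k])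
  then have "b * g / (a * k) = -1" using h dg unfolding harmonic_set_def by simp
  then have "b * g = - (a * k)" using a k by (simp add: field_simps)
  then have "g * (- b) - k * a = 0" by (simp add: algebra_simps)
  then show "pp d = pp (lc a p (- b) q)" unfolding dg using pp_eq_lc[OF n, of g k a "-b"] g a by simp
qed


lemma harm_conj_pp:
  assumes two: "(2::'a::field) \<noteq> 0" and n: "vcross p q \<noteq> (vzero :: 'a vec3)"
    and a: "a \<noteq> 0" and b: "b \<noteq> 0"
  shows "harm_conj (pp p) (pp q) (pp (lc a p b q)) = pp (lc a p (- b) q)"
  unfolding harm_conj_def
proof (rule the_equality)
  have z: "lc a p (- b) q \<noteq> vzero" using lc_nz[OF n] a by blast
  show "harmonic_set (pp p) (pp (lc a p b q)) (pp q) (pp (lc a p (- b) q))"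
    using harm_iff[OF two n a b z] by simp
next
  fix D assume h: "harmonic_set (pp p) (pp (lc a p b q)) (pp q) D"
  obtain d where d: "d \<noteq> vzero" "D = pp d" using pp_surj by blast
  show "D = pp (lc a p (- b) q)" using h harm_iff[OF two n a b d(1)] d(2) by simp
qed

lemma ex_dot: "v \<noteq> vzero \<Longrightarrow> \<exists>t. vdot t (v::'a::field vec3) \<noteq> 0"
proof -
  assume v: "v \<noteq> vzero"
  obtain v1 v2 v3 where vv: "v = (v1, v2, v3)" by (cases v)
  consider "v1 \<noteq> 0" | "v2 \<noteq> 0" | "v3 \<noteq> 0" using v vv by (auto simp: vsimps)
  then show ?thesis
  proof cases
    case 1 then show ?thesis by (intro exI[of _ "(1,0,0)"]) (simp add: vv vsimps)
  next
    case 2 then show ?thesis by (intro exI[of _ "(0,1,0)"]) (simp add: vv vsimps)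
  next
    case 3 then show ?thesis by (intro exI[of _ "(0,0,1)"]) (simp add: vv vsimps)
  qed
qed

lemma dot_zero_l: "vdot vzero v = 0" by (cases v) (simp add: vsimps)

lemma pencil_meets:
  assumes t: "vdot t (vcross l m) \<noteq> 0" and ab: "a \<noteq> 0 \<or> b \<noteq> 0"
  shows "meet (ll t) (ll (lc a l b m)) = pp (lc a (vcross t l) b (vcross t m))"
proof -
  have t0: "t \<noteq> vzero" using t dot_zero_l[of "vcross l m"] by auto
  have xy: "vcross (vcross t l) (vcross t m) \<noteq> vzero"
    using t t0 by (simp add: cross_cross2 scale_zero_iff')
  have "vcross t (lc a l b m) \<noteq> vzero" unfolding cross_lin using lc_nz[OF xy ab] .
  then show ?thesis using meet_ll cross_lin by metis
qed

lemma xy_nz: "vdot t (vcross l m) \<noteq> 0 \<Longrightarrow> vcross (vcross t l) (vcross t m) \<noteq> vzero"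
  using dot_zero_l[of "vcross l m"] by (auto simp: cross_cross2 scale_zero_iff')

lemma pencil_harm:
  assumes two: "(2::'a::field) \<noteq> 0" and t: "vdot t (vcross l m) \<noteq> (0::'a)"
    and a3: "a3 \<noteq> 0" and b3: "b3 \<noteq> 0" and ab4: "a4 \<noteq> 0 \<or> b4 \<noteq> 0"
  shows "harmonic_set (meet (ll t) (ll l)) (meet (ll t) (ll (lc a3 l b3 m)))
           (meet (ll t) (ll m)) (meet (ll t) (ll (lc a4 l b4 m))) \<longleftrightarrow> a3 * b4 + a4 * b3 = 0"
proof -
  have xy: "vcross (vcross t l) (vcross t m) \<noteq> vzero" using xy_nz[OF t] .
  have e1: "meet (ll t) (ll l) = pp (vcross t l)"
    using pencil_meets[OF t, of 1 0] by (simp add: lc10)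
  have e2: "meet (ll t) (ll m) = pp (vcross t m)"
    using pencil_meets[OF t, of 0 1] by (simp add: lc01)
  have z4: "lc a4 (vcross t l) b4 (vcross t m) \<noteq> vzero" using lc_nz[OF xy ab4] .
  have "harmonic_set (meet (ll t) (ll l)) (meet (ll t) (ll (lc a3 l b3 m)))
           (meet (ll t) (ll m)) (meet (ll t) (ll (lc a4 l b4 m))) \<longleftrightarrow>
        pp (lc a4 (vcross t l) b4 (vcross t m)) = pp (lc a3 (vcross t l) (- b3) (vcross t m))"
    unfolding e1 e2 pencil_meets[OF t ab4] pencil_meets[OF t, of a3 b3, OF disjI1[OF a3]]
    using harm_iff[OF two xy a3 b3 z4] by simp
  also have "\<dots> \<longleftrightarrow> a4 * (- b3) - b4 * a3 = 0" using pp_eq_lc[OF xy ab4, of a3 "-b3"] a3 by simp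
  also have "\<dots> \<longleftrightarrow> - (a3 * b4 + a4 * b3) = 0"
    by (rule arg_cong[where f="\<lambda>x. x = 0"]) (simp add: algebra_simps)
  also have "\<dots> \<longleftrightarrow> a3 * b4 + a4 * b3 = 0" by (simp only: neg_equal_0_iff_equal)
  finally show ?thesis .
qed


lemma incid_pencil: "vcross l m \<noteq> vzero \<Longrightarrow> lc a l b m \<noteq> vzero \<Longrightarrow>
    incid (pp (vcross l m)) (ll (lc a l b m))"
  using incid_pp_ll[of "vcross l m" "lc a l b m"] by (simp add: vdot_comm[of "vcross l m"] dot_lc)

lemma pencil_iff:
  assumes two: "(2::'a::field) \<noteq> 0" and n: "vcross l m \<noteq> (vzero::'a vec3)"
    and z3: "lc a3 l b3 m \<noteq> vzero" and z4: "lc a4 l b4 m \<noteq> vzero"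
  shows "harmonic_pencil (ll l) (ll (lc a3 l b3 m)) (ll m) (ll (lc a4 l b4 m)) \<longleftrightarrow>
     a3 \<noteq> 0 \<and> b3 \<noteq> 0 \<and> a4 \<noteq> 0 \<and> b4 \<noteq> 0 \<and> a3 * b4 + a4 * b3 = 0"
proof -
  have ab3: "a3 \<noteq> 0 \<or> b3 \<noteq> 0" using z3 lc00[of l m] by auto
  have ab4: "a4 \<noteq> 0 \<or> b4 \<noteq> 0" using z4 lc00[of l m] by auto
  have L: "ll l = ll (lc 1 l 0 m)" "ll m = ll (lc 0 l 1 m)" by (simp_all add: lc10 lc01)
  have M: "meet (ll l) (ll m) = pp (vcross l m)" using meet_ll[OF n] .
  have I: "\<And>t. t \<noteq> vzero \<Longrightarrow> incid (pp (vcross l m)) (ll t) \<longleftrightarrow> vdot t (vcross l m) = 0"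
    using incid_pp_ll[OF n] vdot_comm by metis
  show ?thesis
  proof
    assume h: "harmonic_pencil (ll l) (ll (lc a3 l b3 m)) (ll m) (ll (lc a4 l b4 m))"
    have d: "ll (lc 1 l 0 m) \<noteq> ll (lc a3 l b3 m)" "ll (lc a3 l b3 m) \<noteq> ll (lc 0 l 1 m)"
       "ll (lc 1 l 0 m) \<noteq> ll (lc a4 l b4 m)" "ll (lc 0 l 1 m) \<noteq> ll (lc a4 l b4 m)"
      using h unfolding harmonic_pencil_def L by auto
    have b3: "b3 \<noteq> 0" using d(1) ll_eq_lc[OF n _ ab3, of 1 0] by auto
    have a3: "a3 \<noteq> 0" using d(2) ll_eq_lc[OF n ab3, of 0 1] by auto
    have b4: "b4 \<noteq> 0" using d(3) ll_eq_lc[OF n _ ab4, of 1 0] by auto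
    have a4: "a4 \<noteq> 0" using d(4) ll_eq_lc[OF n _ ab4, of 0 1] by auto
    obtain T where T: "\<not> incid (meet (ll l) (ll m)) T"
      "harmonic_set (meet T (ll l)) (meet T (ll (lc a3 l b3 m))) (meet T (ll m)) (meet T (ll (lc a4 l b4 m)))"
      using h unfolding harmonic_pencil_def by blast
    obtain t where t: "t \<noteq> vzero" "T = ll t" using ll_surj by blast
    have td: "vdot t (vcross l m) \<noteq> 0" using T(1) unfolding M t(2) using I[OF t(1)] by simp
    have "a3 * b4 + a4 * b3 = 0" using T(2) pencil_harm[OF two td a3 b3 ab4] unfolding t(2) by simp
    then show "a3 \<noteq> 0 \<and> b3 \<noteq> 0 \<and> a4 \<noteq> 0 \<and> b4 \<noteq> 0 \<and> a3 * b4 + a4 * b3 = 0"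
      using a3 b3 a4 b4 by simp
  next
    assume c: "a3 \<noteq> 0 \<and> b3 \<noteq> 0 \<and> a4 \<noteq> 0 \<and> b4 \<noteq> 0 \<and> a3 * b4 + a4 * b3 = 0"
    have e: "a3 * b4 = - (a4 * b3)" using c by (simp add: eq_neg_iff_add_eq_0)
    have dd: "a3 * b4 - b3 * a4 = - (2 * (a4 * b3))" unfolding e by (simp add: algebra_simps)
    have nz: "2 * (a4 * b3) \<noteq> 0" using two c by simp
    have "a3 * b4 - b3 * a4 \<noteq> 0" unfolding dd using nz by simp
    then have d34: "ll (lc a3 l b3 m) \<noteq> ll (lc a4 l b4 m)" using ll_eq_lc[OF n ab3 ab4] by simp
    have dist: "distinct [ll l, ll (lc a3 l b3 m), ll m, ll (lc a4 l b4 m)]"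
      using ll_ne1[OF n, of b3 a3] ll_ne1[OF n, of b4 a4] ll_ne2[OF n, of a3 b3, THEN not_sym]
        ll_ne2[OF n, of a4 b4] ll_ne3[OF n] d34 c by auto
    have conc: "concurrent4 (ll l) (ll (lc a3 l b3 m)) (ll m) (ll (lc a4 l b4 m))"
      unfolding concurrent4_def L
      using incid_pencil[OF n z3] incid_pencil[OF n z4]
        incid_pencil[OF n, of 1 0] incid_pencil[OF n, of 0 1] cross_nz[OF n]
      by (intro exI[of _ "pp (vcross l m)"]) (simp add: lc10 lc01)
    obtain t where td: "vdot t (vcross l m) \<noteq> 0" using ex_dot[OF n] by blast
    have t0: "t \<noteq> vzero" using td dot_zero_l[of "vcross l m"] by auto
    have "\<not> incid (meet (ll l) (ll m)) (ll t)" unfolding M using I[OF t0] td by simp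
    moreover have "harmonic_set (meet (ll t) (ll l)) (meet (ll t) (ll (lc a3 l b3 m)))
           (meet (ll t) (ll m)) (meet (ll t) (ll (lc a4 l b4 m)))"
      using pencil_harm[OF two td _ _ ab4, of a3 b3] c by simp
    ultimately show "harmonic_pencil (ll l) (ll (lc a3 l b3 m)) (ll m) (ll (lc a4 l b4 m))"
      unfolding harmonic_pencil_def using dist conc by blast
  qed
qed

lemma harm_conj_line_ll:
  assumes two: "(2::'a::field) \<noteq> 0" and n: "vcross l m \<noteq> (vzero::'a vec3)"
    and a: "a \<noteq> 0" and b: "b \<noteq> 0"
  shows "harm_conj_line (ll l) (ll m) (ll (lc a l b m)) = ll (lc a l (- b) m)"
  unfolding harm_conj_line_def
proof (rule the_equality)
  have z3: "lc a l b m \<noteq> vzero" and z4: "lc a l (- b) m \<noteq> vzero" using lc_nz[OF n] a by auto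
  show "harmonic_pencil (ll l) (ll (lc a l b m)) (ll m) (ll (lc a l (- b) m))"
    using pencil_iff[OF two n z3 z4] a b by simp
next
  fix L4 assume h: "harmonic_pencil (ll l) (ll (lc a l b m)) (ll m) L4"
  have z3: "lc a l b m \<noteq> vzero" using lc_nz[OF n] a by auto
  obtain P where P: "incid P (ll l)" "incid P (ll m)" "incid P L4"
    using h unfolding harmonic_pencil_def concurrent4_def by blast
  have Pe: "P = pp (vcross l m)" using point_unique[OF P(1,2) n] .
  obtain v where v: "v \<noteq> vzero" "L4 = ll v" using ll_surj by blast
  have "vdot v (vcross l m) = 0" using P(3) Pe v incid_pp_ll[OF n v(1)] vdot_comm by metis
  then obtain g k where gk: "v = lc g l k m" using span3[OF _ n] by blast
  have "a * k + g * b = 0" using h pencil_iff[OF two n z3, of g k] v gk by simp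
  moreover have "g * (- b) - k * a = - (a * k + g * b)" by (simp add: algebra_simps)
  ultimately have "g * (- b) - k * a = 0" by simp
  moreover have "g \<noteq> 0 \<or> k \<noteq> 0" using v gk lc00[of l m] by auto
  ultimately show "L4 = ll (lc a l (- b) m)" unfolding v(2) gk using ll_eq_lc[OF n, of g k a "-b"] a by simp
qed


definition Mv :: "'a::field vec3 \<Rightarrow> 'a vec3 \<Rightarrow> 'a vec3 \<Rightarrow> 'a vec3 \<Rightarrow> 'a vec3" where
  "Mv a b c u = (case u of (x, y, z) \<Rightarrow> vadd (vadd (vscale x a) (vscale y b)) (vscale z c))"
definition Kv :: "'a::field vec3 \<Rightarrow> 'a vec3 \<Rightarrow> 'a vec3 \<Rightarrow> 'a vec3 \<Rightarrow> 'a vec3" where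
  "Kv a b c u = Mv (vcross b c) (vcross c a) (vcross a b) u"

lemma Mv_simp: "Mv (a1,a2,a3) (b1,b2,b3) (c1,c2,c3) (x,y,z) =
   (x*a1 + y*b1 + z*c1, x*a2 + y*b2 + z*c2, x*a3 + y*b3 + z*c3)"
  by (simp add: Mv_def vsimps)

lemma T1: "vdot (Mv a b c u) (Kv a b c l) = vdot a (vcross b c) * vdot u l"
  apply (cases a, cases b, cases c, cases u, cases l)
  apply (simp add: Kv_def Mv_simp vsimps)
  apply (simp add: algebra_simps)
  done

lemma T2: "vcross (Mv a b c u) (Mv a b c v) = Kv a b c (vcross u v)"
  apply (cases a, cases b, cases c, cases u, cases v)
  apply (simp add: Kv_def Mv_simp vsimps)
  apply (simp add: algebra_simps)
  done

lemma T3: "vcross (Kv a b c u) (Kv a b c v) = vscale (vdot a (vcross b c)) (Mv a b c (vcross u v))"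
  apply (cases a, cases b, cases c, cases u, cases v)
  apply (simp add: Kv_def Mv_simp vsimps)
  apply (simp add: algebra_simps)
  done

lemma T4: "Mv a b c (lc s u t v) = lc s (Mv a b c u) t (Mv a b c v)"
  apply (cases a, cases b, cases c, cases u, cases v)
  apply (simp add: Mv_simp vsimps)
  apply (simp add: algebra_simps)
  done

lemma T4K: "Kv a b c (lc s u t v) = lc s (Kv a b c u) t (Kv a b c v)"
  unfolding Kv_def by (rule T4)

lemma T6: "Mv a b c (vdot v (vcross b c), vdot v (vcross c a), vdot v (vcross a b)) = vscale (vdot a (vcross b c)) v"
  apply (cases a, cases b, cases c, cases v)
  apply (simp add: Mv_simp vsimps)
  apply (simp add: algebra_simps)
  done

lemma T6K: "Kv a b c (vdot w a, vdot w b, vdot w c) = vscale (vdot a (vcross b c)) w"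
  apply (cases a, cases b, cases c, cases w)
  apply (simp add: Kv_def Mv_simp vsimps)
  apply (simp add: algebra_simps)
  done


lemma Mv_zero: "Mv a b c vzero = vzero"
  by (cases a, cases b, cases c) (simp add: Mv_simp vsimps)

locale frame =
  fixes fa fb fc :: "'a::field vec3"
  assumes det: "vdot fa (vcross fb fc) \<noteq> 0"
begin

abbreviation "dl \<equiv> vdot fa (vcross fb fc)"
definition P :: "'a vec3 \<Rightarrow> 'a ppoint" where "P u = pp (Mv fa fb fc u)"
definition L :: "'a vec3 \<Rightarrow> 'a pline" where "L u = ll (Kv fa fb fc u)"

lemma M_inj: "u \<noteq> vzero \<Longrightarrow> Mv fa fb fc u \<noteq> vzero"
proof
  assume u: "u \<noteq> vzero" and z: "Mv fa fb fc u = vzero"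
  obtain l where l: "vdot l u \<noteq> 0" using ex_dot[OF u] by blast
  have "vdot (Mv fa fb fc u) (Kv fa fb fc l) = dl * vdot u l" by (rule T1)
  then show False using z l det dot_zero_l vdot_comm by (metis mult_eq_0_iff)
qed

lemma K_inj: "u \<noteq> vzero \<Longrightarrow> Kv fa fb fc u \<noteq> vzero"
proof
  assume u: "u \<noteq> vzero" and z: "Kv fa fb fc u = vzero"
  obtain l where l: "vdot l u \<noteq> 0" using ex_dot[OF u] by blast
  have "vdot (Mv fa fb fc l) (Kv fa fb fc u) = dl * vdot l u" by (rule T1)
  then show False using z l det dot_zero_l vdot_comm by (metis mult_eq_0_iff)
qed

lemma P_surj: "\<exists>u. u \<noteq> vzero \<and> X = P u"
proof -
  obtain v where v: "v \<noteq> vzero" "X = pp v" using pp_surj by blast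
  define u where "u = (vdot v (vcross fb fc), vdot v (vcross fc fa), vdot v (vcross fa fb))"
  have e: "Mv fa fb fc u = vscale dl v" unfolding u_def by (rule T6)
  then have "Mv fa fb fc u \<noteq> vzero" using v det by (simp add: scale_zero_iff')
  then have "u \<noteq> vzero" using Mv_zero by metis
  moreover have "X = P u" unfolding P_def e using pp_scale[OF det v(1)] v by simp
  ultimately show ?thesis by blast
qed

lemma L_surj: "\<exists>u. u \<noteq> vzero \<and> X = L u"
proof -
  obtain v where v: "v \<noteq> vzero" "X = ll v" using ll_surj by blast
  define u where "u = (vdot v fa, vdot v fb, vdot v fc)"
  have e: "Kv fa fb fc u = vscale dl v" unfolding u_def by (rule T6K)
  then have "Kv fa fb fc u \<noteq> vzero" using v det by (simp add: scale_zero_iff')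
  then have "u \<noteq> vzero" using Mv_zero Kv_def by metis
  moreover have "X = L u" unfolding L_def e using ll_scale[OF det v(1)] v by simp
  ultimately show ?thesis by blast
qed

lemma P_eq: "u \<noteq> vzero \<Longrightarrow> v \<noteq> vzero \<Longrightarrow> P u = P v \<longleftrightarrow> vcross u v = vzero"
  unfolding P_def using pp_eq[OF M_inj M_inj] T2 K_inj Kv_def Mv_zero by metis

lemma L_eq: "u \<noteq> vzero \<Longrightarrow> v \<noteq> vzero \<Longrightarrow> L u = L v \<longleftrightarrow> vcross u v = vzero"
proof -
  assume u: "u \<noteq> vzero" and v: "v \<noteq> vzero"
  have "L u = L v \<longleftrightarrow> vscale dl (Mv fa fb fc (vcross u v)) = vzero"
    unfolding L_def using ll_eq[OF K_inj[OF u] K_inj[OF v]] T3 by metis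
  also have "\<dots> \<longleftrightarrow> vcross u v = vzero" using det M_inj Mv_zero by (metis scale_zero_iff')
  finally show ?thesis .
qed

lemma incid_PL: "u \<noteq> vzero \<Longrightarrow> v \<noteq> vzero \<Longrightarrow> incid (P u) (L v) \<longleftrightarrow> vdot u v = 0"
  unfolding P_def L_def by (simp add: incid_pp_ll[OF M_inj K_inj] T1 det)

lemma join_P: "vcross u v \<noteq> vzero \<Longrightarrow> join (P u) (P v) = L (vcross u v)"
  unfolding P_def L_def using join_pp T2 K_inj by metis

lemma meet_L: "vcross u v \<noteq> vzero \<Longrightarrow> meet (L u) (L v) = P (vcross u v)"
proof -
  assume n: "vcross u v \<noteq> vzero"
  have nz: "vcross (Kv fa fb fc u) (Kv fa fb fc v) \<noteq> vzero"
    unfolding T3 using M_inj[OF n] det by (simp add: scale_zero_iff')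
  show ?thesis unfolding L_def P_def meet_ll[OF nz] T3 using pp_scale[OF det M_inj[OF n]] .
qed

lemma harm_conj_P:
  assumes two: "(2::'a) \<noteq> 0" and n: "vcross p q \<noteq> vzero" and a: "a \<noteq> 0" and b: "b \<noteq> 0"
  shows "harm_conj (P p) (P q) (P (lc a p b q)) = P (lc a p (- b) q)"
  unfolding P_def T4 using harm_conj_pp[OF two _ a b] T2 K_inj[OF n] by metis

lemma harm_conj_line_L:
  assumes two: "(2::'a) \<noteq> 0" and n: "vcross p q \<noteq> vzero" and a: "a \<noteq> 0" and b: "b \<noteq> 0"
  shows "harm_conj_line (L p) (L q) (L (lc a p b q)) = L (lc a p (- b) q)"
proof -
  have nz: "vcross (Kv fa fb fc p) (Kv fa fb fc q) \<noteq> vzero"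
    unfolding T3 using M_inj[OF n] det by (simp add: scale_zero_iff')
  show ?thesis unfolding L_def T4K using harm_conj_line_ll[OF two nz a b] .
qed

lemma pencil_L:
  assumes two: "(2::'a) \<noteq> 0" and n: "vcross l m \<noteq> vzero"
    and z3: "lc a3 l b3 m \<noteq> vzero" and z4: "lc a4 l b4 m \<noteq> vzero"
  shows "harmonic_pencil (L l) (L (lc a3 l b3 m)) (L m) (L (lc a4 l b4 m)) \<longleftrightarrow>
     a3 \<noteq> 0 \<and> b3 \<noteq> 0 \<and> a4 \<noteq> 0 \<and> b4 \<noteq> 0 \<and> a3 * b4 + a4 * b3 = 0"
proof -
  have nz: "vcross (Kv fa fb fc l) (Kv fa fb fc m) \<noteq> vzero"
    unfolding T3 using M_inj[OF n] det by (simp add: scale_zero_iff')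
  show ?thesis unfolding L_def T4K
    using pencil_iff[OF two nz] K_inj[OF z3] K_inj[OF z4] unfolding T4K by blast
qed

end


context frame begin

lemma P_scale: "c \<noteq> 0 \<Longrightarrow> u \<noteq> vzero \<Longrightarrow> P (vscale c u) = P u"
  using P_eq[of "vscale c u" u] scale_nz[of c u] cross_scale_self[of c u] by simp

lemma P_par: "u \<noteq> vzero \<Longrightarrow> v \<noteq> vzero \<Longrightarrow> P u = P v \<Longrightarrow> \<exists>k. u = vscale k v"
  using P_eq[of v u] par_ex[of v u] by metis

lemma tangents:
  assumes two: "(2::'a) \<noteq> 0"
  shows "tangent_at (P (1,0,0)) (P (0,0,1)) (P (0,1,0)) (P (1,1,1)) = L (0, -2, 1)"
    and "tangent_at (P (0,1,0)) (P (1,1,1)) (P (1,0,0)) (P (0,0,1)) = L (2, 0, -1)"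
proof -
  have j1: "join (P (1,0,0)) (P (0,0,1)) = L (0,-1,0)"
    using join_P[of "(1,0,0)" "(0,0,1)"] by (simp add: vsimps)
  have j2: "join (P (1,1,1)) (P (1,0,0)) = L (0,1,-1)"
    using join_P[of "(1,1,1)" "(1,0,0)"] by (simp add: vsimps)
  have j3: "join (P (1,0,0)) (P (0,1,0)) = L (0,0,1)"
    using join_P[of "(1,0,0)" "(0,1,0)"] by (simp add: vsimps)
  have e3: "L (0,0,1) = L (lc 1 (0,-1,0) 1 (0,1,-1))"
    using L_eq[of "(0,0,1)" "lc 1 (0,-1,0) 1 (0,1,-1)"] by (simp add: vsimps)
  have "tangent_at (P (1,0,0)) (P (0,0,1)) (P (0,1,0)) (P (1,1,1)) = L (lc 1 (0,-1,0) (-1) (0,1,-1))"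
    unfolding tangent_at_def j1 j2 j3 e3
    by (rule harm_conj_line_L[OF two]) (simp_all add: vsimps)
  also have "\<dots> = L (0,-2,1)" by (simp add: vsimps)
  finally show "tangent_at (P (1,0,0)) (P (0,0,1)) (P (0,1,0)) (P (1,1,1)) = L (0, -2, 1)" .
  have k1: "join (P (0,1,0)) (P (1,1,1)) = L (1,0,-1)"
    using join_P[of "(0,1,0)" "(1,1,1)"] by (simp add: vsimps)
  have k2: "join (P (0,0,1)) (P (0,1,0)) = L (-1,0,0)"
    using join_P[of "(0,0,1)" "(0,1,0)"] by (simp add: vsimps)
  have k3: "join (P (0,1,0)) (P (1,0,0)) = L (lc 1 (1,0,-1) 1 (-1,0,0))"
    using join_P[of "(0,1,0)" "(1,0,0)"] by (simp add: vsimps)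
  have "tangent_at (P (0,1,0)) (P (1,1,1)) (P (1,0,0)) (P (0,0,1)) = L (lc 1 (1,0,-1) (-1) (-1,0,0))"
    unfolding tangent_at_def k1 k2 k3
    by (rule harm_conj_line_L[OF two]) (simp_all add: vsimps)
  also have "\<dots> = L (2,0,-1)" by (simp add: vsimps)
  finally show "tangent_at (P (0,1,0)) (P (1,1,1)) (P (1,0,0)) (P (0,0,1)) = L (2, 0, -1)" .
qed

lemma ab_facts:
  assumes two: "(2::'a) \<noteq> 0"
  shows "L (0, -2, 1) \<noteq> L (2, 0, -1)" and "meet (L (0, -2, 1)) (L (2, 0, -1)) = P (2, 2, 4)"
proof -
  have n: "vcross (0, -2, 1) (2, 0, -1) = ((2, 2, 4) :: 'a vec3)" by (simp add: vsimps)
  have nz: "((2, 2, 4) :: 'a vec3) \<noteq> vzero" using two by (simp add: vsimps)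
  show "L (0, -2, 1) \<noteq> L (2, 0, -1)" using L_eq[of "(0, -2, 1)" "(2, 0, -1)"] n nz two
    by (simp add: vsimps)
  show "meet (L (0, -2, 1)) (L (2, 0, -1)) = P (2, 2, 4)" using meet_L[of "(0, -2, 1)" "(2, 0, -1)"] n nz
    by simp
qed

definition Rv :: "'a \<Rightarrow> 'a \<Rightarrow> 'a vec3" where "Rv x y = (x * (x + y), y * (x + y), 2 * x * y)"

lemma Xcomp:
  assumes two: "(2::'a) \<noteq> 0" and x: "x \<noteq> 0" and y: "y \<noteq> 0"
  defines "X \<equiv> P (x, y, 0)"
  defines "rX \<equiv> rho_line (P (1,0,0)) (P (0,1,0)) X"
  shows "rX \<noteq> P (2, 2, 4) \<and> \<not> incid X (join rX (P (2, 2, 4))) \<and>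
         rho_refl X (join rX (P (2, 2, 4))) (P (0,0,1)) = P (Rv x y)"
proof -
  have four: "(4::'a) \<noteq> 0" using two by (metis mult_eq_0_iff numeral_Bit0 one_add_one mult_2)
  have eight: "(8::'a) \<noteq> 0" using two four by (metis mult_eq_0_iff numeral_Bit0 mult_2)
  have XA: "X \<noteq> P (1,0,0)" unfolding X_def using P_eq[of "(x,y,0)" "(1,0,0)"] x y by (simp add: vsimps)
  have XB: "X \<noteq> P (0,1,0)" unfolding X_def using P_eq[of "(x,y,0)" "(0,1,0)"] x y by (simp add: vsimps)
  have Xlc: "X = P (lc x (1,0,0) y (0,1,0))" unfolding X_def by (simp add: vsimps)
  have h: "harm_conj (P (1,0,0)) (P (0,1,0)) X = P (x, -y, 0)"
    using harm_conj_P[OF two _ x y, of "(1,0,0)" "(0,1,0)"] unfolding Xlc by (simp add: vsimps)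
  have r: "rX = P (x, -y, 0)" unfolding rX_def rho_line_def using XA XB h by simp
  have rne: "P (x, -y, 0) \<noteq> P (2, 2, 4)"
    using P_eq[of "(x, -y, 0)" "(2, 2, 4)"] x y four by (simp add: vsimps)
  define v where "v = (- (4 * y), - (4 * x), 2 * x + 2 * y)"
  have cv: "vcross (x, -y, 0) (2, 2, 4) = v" unfolding v_def by (simp add: vsimps algebra_simps)
  have vnz: "v \<noteq> vzero" unfolding v_def using four x by (simp add: vsimps)
  have jv: "join rX (P (2, 2, 4)) = L v" unfolding r using join_P[of "(x, -y, 0)" "(2, 2, 4)"] cv vnz by simp
  have dX: "vdot (x, y, 0) v = - (8 * (x * y))" unfolding v_def by (simp add: vsimps algebra_simps)
  have nX: "\<not> incid X (L v)" unfolding X_def using incid_PL[of "(x, y, 0)" v] vnz dX x y eight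
    by (simp add: vsimps)
  have CX: "P (0,0,1) \<noteq> X" unfolding X_def using P_eq[of "(0,0,1)" "(x, y, 0)"] x y by (simp add: vsimps)
  have dC: "vdot (0, 0, 1) v = 2 * (x + y)" unfolding v_def by (simp add: vsimps algebra_simps)
  have t2: "(2 * (x + y) = 0) = (x + y = 0)" using two by (simp only: mult_eq_0_iff) simp
  have "incid (P (0,0,1)) (L v) \<longleftrightarrow> vdot (0,0,1) v = 0"
    by (rule incid_PL) (use vnz in \<open>simp_all add: vsimps\<close>)
  also have "\<dots> \<longleftrightarrow> 2 * (x + y) = 0" unfolding dC ..
  finally have iC: "incid (P (0,0,1)) (L v) \<longleftrightarrow> x + y = 0" using t2 by simp
  have Rnz: "Rv x y \<noteq> vzero" unfolding Rv_def using two x y by (simp add: vsimps)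
  have "rho_refl X (L v) (P (0,0,1)) = P (Rv x y)"
  proof (cases "x + y = 0")
    case True
    have "P (Rv x y) = P (0,0,1)" using P_eq[OF Rnz, of "(0,0,1)"] True
      by (simp add: vsimps Rv_def)
    then show ?thesis unfolding rho_refl_def using iC True by simp
  next
    case False
    have J: "join (P (0,0,1)) X = L (- y, x, 0)" unfolding X_def
      using join_P[of "(0,0,1)" "(x, y, 0)"] x by (simp add: vsimps)
    define N where "N = (2 * x * (x + y), 2 * y * (x + y), 8 * x * y)"
    have cN: "vcross (- y, x, 0) v = N" unfolding v_def N_def by (simp add: vsimps algebra_simps)
    have Nnz: "N \<noteq> vzero" unfolding N_def using eight x y by (simp add: vsimps)
    have Me: "meet (L (- y, x, 0)) (L v) = P N" using meet_L[of "(- y, x, 0)" v] cN Nnz by simp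
    have xN: "vcross (x, y, 0) N \<noteq> vzero" unfolding N_def using eight x y by (simp add: vsimps)
    have al: "- (2 * (x + y)) \<noteq> 0" using two False by (simp only: neg_equal_0_iff_equal mult_eq_0_iff) simp
    have Clc: "P (0,0,1) = P (lc (- (2 * (x + y))) (x, y, 0) 1 N)"
    proof -
      have e: "lc (- (2 * (x + y))) (x, y, 0) 1 N = (0, 0, 8 * x * y)" unfolding N_def
        by (simp add: vsimps algebra_simps)
      show ?thesis unfolding e using P_eq[of "(0,0,1)" "(0, 0, 8 * x * y)"] eight x y by (simp add: vsimps)
    qed
    have H: "harm_conj X (P N) (P (0,0,1)) = P (lc (- (2 * (x + y))) (x, y, 0) (- 1) N)"
      unfolding Clc X_def by (rule harm_conj_P[OF two xN al]) simp
    have e2: "lc (- (2 * (x + y))) (x, y, 0) (- 1) N = vscale (-4) (Rv x y)"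
      unfolding N_def Rv_def by (simp add: vsimps algebra_simps)
    have "rho_refl X (L v) (P (0,0,1)) = harm_conj X (P N) (P (0,0,1))"
      unfolding rho_refl_def using CX iC False J Me by simp
    also have "\<dots> = P (Rv x y)" unfolding H e2 using P_scale[OF _ Rnz, of "-4"] four by simp
    finally show ?thesis .
  qed
  then show ?thesis using rne r jv nX by simp
qed

end

definition cn :: "'a::field vec3 \<Rightarrow> bool" where
  "cn z = (case z of (z1, z2, z3) \<Rightarrow> 2 * z1 * z2 = z3 * (z1 + z2))"

lemma cn_simp: "cn (z1, z2, z3) \<longleftrightarrow> 2 * z1 * z2 = z3 * (z1 + z2)" by (simp add: cn_def)

lemma cn_scale: "cn w \<Longrightarrow> cn (vscale k w)"
proof -
  assume h: "cn w"
  obtain w1 w2 w3 where w: "w = (w1, w2, w3)" by (cases w)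
  have "2 * w1 * w2 = w3 * (w1 + w2)" using h w by (simp add: cn_simp)
  then have "k * k * (2 * w1 * w2) = k * k * (w3 * (w1 + w2))" by simp
  then show ?thesis unfolding w by (simp add: cn_simp vsimps algebra_simps)
qed

context frame begin

lemma L_scale: "c \<noteq> 0 \<Longrightarrow> u \<noteq> vzero \<Longrightarrow> L (vscale c u) = L u"
  using L_eq[of "vscale c u" u] scale_nz[of c u] cross_scale_self[of c u] by simp

lemma cn_of_P: "z \<noteq> vzero \<Longrightarrow> w \<noteq> vzero \<Longrightarrow> P z = P w \<Longrightarrow> cn w \<Longrightarrow> cn z"
  using P_par cn_scale by metis

lemma HC_iff:
  assumes two: "(2::'a) \<noteq> 0" and z: "z \<noteq> vzero"
  shows "P z \<in> harmonic_curve (P (1,0,0)) (P (0,0,1)) (P (0,1,0)) (P (1,1,1)) \<longleftrightarrow> cn z"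
proof -
  obtain z1 z2 z3 where zz: "z = (z1, z2, z3)" by (cases z)
  let ?A = "P (1,0,0)" and ?B = "P (0,1,0)" and ?C = "P (0,0,1)" and ?D = "P (1,1,1)"
  have nzs: "((1,0,0)::'a vec3) \<noteq> vzero" "((0,1,0)::'a vec3) \<noteq> vzero" "((0,0,1)::'a vec3) \<noteq> vzero"
     "((1,1,1)::'a vec3) \<noteq> vzero" by (simp_all add: vsimps)
  have cns: "cn ((1,0,0)::'a vec3)" "cn ((0,1,0)::'a vec3)" "cn ((0,0,1)::'a vec3)" "cn ((1,1,1)::'a vec3)"
    by (simp_all add: cn_simp)
  show ?thesis
  proof (cases "P z \<in> {?A, ?C, ?B, ?D}")
    case True
    then have "cn z" using cn_of_P[OF z nzs(1) _ cns(1)] cn_of_P[OF z nzs(2) _ cns(2)]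
      cn_of_P[OF z nzs(3) _ cns(3)] cn_of_P[OF z nzs(4) _ cns(4)] by blast
    then show ?thesis using True unfolding harmonic_curve_def by blast
  next
    case False
    then have nA: "P z \<noteq> ?A" and nB: "P z \<noteq> ?B" and nC: "P z \<noteq> ?C" and nD: "P z \<noteq> ?D" by auto
    have cA: "vcross z (1,0,0) \<noteq> vzero" using nA P_eq[OF z nzs(1)] by simp
    have cB: "vcross z (0,1,0) \<noteq> vzero" using nB P_eq[OF z nzs(2)] by simp
    have cC: "vcross z (0,0,1) \<noteq> vzero" using nC P_eq[OF z nzs(3)] by simp
    have cD: "vcross z (1,1,1) \<noteq> vzero" using nD P_eq[OF z nzs(4)] by simp
    have HC: "P z \<in> harmonic_curve ?A ?C ?B ?D \<longleftrightarrow>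
        harmonic_pencil (L (vcross z (1,0,0))) (L (vcross z (0,0,1))) (L (vcross z (0,1,0))) (L (vcross z (1,1,1)))"
    proof -
      have "P z \<in> harmonic_curve ?A ?C ?B ?D \<longleftrightarrow>
        distinct [join (P z) ?A, join (P z) ?C, join (P z) ?B, join (P z) ?D] \<and>
        harmonic_pencil (join (P z) ?A) (join (P z) ?C) (join (P z) ?B) (join (P z) ?D)"
        unfolding harmonic_curve_def using False by auto
      then show ?thesis unfolding join_P[OF cA] join_P[OF cB] join_P[OF cC] join_P[OF cD]
        harmonic_pencil_def by blast
    qed
    show ?thesis
    proof (cases "z3 = 0")
      case True
      have "L (vcross z (1,0,0)) = L (vcross z (0,1,0))"
        using L_eq[OF cA cB] True by (simp add: zz vsimps)
      then have "P z \<notin> harmonic_curve ?A ?C ?B ?D" unfolding HC harmonic_pencil_def by simp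
      moreover have "\<not> cn z"
      proof
        assume "cn z"
        then have "z1 * z2 = 0" using True two by (simp add: zz cn_simp)
        then have "z1 = 0 \<or> z2 = 0" by simp
        then show False
        proof
          assume "z1 = 0"
          then have "P z = ?B" using P_eq[OF z nzs(2)] True by (simp add: zz vsimps)
          then show False using nB by simp
        next
          assume "z2 = 0"
          then have "P z = ?A" using P_eq[OF z nzs(1)] True by (simp add: zz vsimps)
          then show False using nA by simp
        qed
      qed
      ultimately show ?thesis by simp
    next
      case z3: False
      define l where "l = vcross z (1,0,0)"
      define m where "m = vcross z (0,1,0)"
      have lm: "vcross l m \<noteq> vzero" unfolding l_def m_def using z3 by (simp add: zz vsimps)
      have e3: "lc z1 l z2 m = vscale (- z3) (vcross z (0,0,1))" unfolding l_def m_def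
        by (simp add: zz vsimps algebra_simps)
      have e4: "lc (z3 - z1) l (z3 - z2) m = vscale z3 (vcross z (1,1,1))" unfolding l_def m_def
        by (simp add: zz vsimps algebra_simps)
      have mz3: "- z3 \<noteq> 0" using z3 by simp
      have n3: "lc z1 l z2 m \<noteq> vzero" unfolding e3 by (rule scale_nz[OF mz3 cC])
      have n4: "lc (z3 - z1) l (z3 - z2) m \<noteq> vzero" unfolding e4 by (rule scale_nz[OF z3 cD])
      have L3: "L (vcross z (0,0,1)) = L (lc z1 l z2 m)"
        unfolding e3 by (rule L_scale[OF mz3 cC, symmetric])
      have L4: "L (vcross z (1,1,1)) = L (lc (z3 - z1) l (z3 - z2) m)"
        unfolding e4 by (rule L_scale[OF z3 cD, symmetric])
      have "P z \<in> harmonic_curve ?A ?C ?B ?D \<longleftrightarrow>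
         z1 \<noteq> 0 \<and> z2 \<noteq> 0 \<and> z3 - z1 \<noteq> 0 \<and> z3 - z2 \<noteq> 0 \<and> z1 * (z3 - z2) + (z3 - z1) * z2 = 0"
        unfolding HC L3 L4 l_def[symmetric] m_def[symmetric] using pencil_L[OF two lm n3 n4] .
      also have "\<dots> \<longleftrightarrow> cn z"
      proof
        assume "z1 \<noteq> 0 \<and> z2 \<noteq> 0 \<and> z3 - z1 \<noteq> 0 \<and> z3 - z2 \<noteq> 0 \<and> z1 * (z3 - z2) + (z3 - z1) * z2 = 0"
        then have "2 * z1 * z2 = z3 * (z1 + z2)" by (simp add: algebra_simps)
        then show "cn z" by (simp add: zz cn_simp)
      next
        assume "cn z"
        then have c: "2 * z1 * z2 = z3 * (z1 + z2)" by (simp add: zz cn_simp)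
        have nC': "\<not> (z1 = 0 \<and> z2 = 0)"
        proof
          assume "z1 = 0 \<and> z2 = 0"
          then have "P z = ?C" using P_eq[OF z nzs(3)] by (simp add: zz vsimps)
          then show False using nC by simp
        qed
        have nD': "\<not> (z1 = z3 \<and> z2 = z3)"
        proof
          assume "z1 = z3 \<and> z2 = z3"
          then have "P z = ?D" using P_eq[OF z nzs(4)] by (simp add: zz vsimps)
          then show False using nD by simp
        qed
        have 1: "z1 \<noteq> 0" using c nC' z3 by auto
        have 2: "z2 \<noteq> 0" using c nC' z3 by auto
        have 3: "z3 - z1 \<noteq> 0"
        proof
          assume "z3 - z1 = 0"
          then have "z1 * (z2 - z1) = 0" using c by (simp add: algebra_simps)
          then show False using 1 nD' \<open>z3 - z1 = 0\<close> by simp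
        qed
        have 4: "z3 - z2 \<noteq> 0"
        proof
          assume "z3 - z2 = 0"
          then have "z2 * (z1 - z2) = 0" using c by (simp add: algebra_simps)
          then show False using 2 nD' \<open>z3 - z2 = 0\<close> by simp
        qed
        have "z1 * (z3 - z2) + (z3 - z1) * z2 = 0" using c by algebra
        then show "z1 \<noteq> 0 \<and> z2 \<noteq> 0 \<and> z3 - z1 \<noteq> 0 \<and> z3 - z2 \<noteq> 0 \<and> z1 * (z3 - z2) + (z3 - z1) * z2 = 0"
          using 1 2 3 4 by simp
      qed
      finally show ?thesis .
    qed
  qed
qed

end

context frame begin

lemma cn_Rv: "cn (Rv x y)"
  by (simp add: Rv_def cn_simp algebra_simps)

lemma Rv_nz: "(2::'a) \<noteq> 0 \<Longrightarrow> x \<noteq> 0 \<Longrightarrow> y \<noteq> 0 \<Longrightarrow> Rv x y \<noteq> vzero"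
  by (simp add: Rv_def vsimps)

lemma RHS_iff:
  assumes two: "(2::'a) \<noteq> 0" and z: "z \<noteq> vzero"
  shows "P z \<in> {P (Rv x y) | x y. x \<noteq> 0 \<and> y \<noteq> 0} \<union> {P (1,0,0), P (0,1,0)} \<longleftrightarrow> cn z"
proof
  assume "P z \<in> {P (Rv x y) | x y. x \<noteq> 0 \<and> y \<noteq> 0} \<union> {P (1,0,0), P (0,1,0)}"
  then consider x y where "x \<noteq> 0" "y \<noteq> 0" "P z = P (Rv x y)" | "P z = P (1,0,0)" | "P z = P (0,1,0)"
    by blast
  then show "cn z"
  proof cases
    case 1 then show ?thesis using cn_of_P[OF z Rv_nz[OF two] _ cn_Rv] by blast
  next
    case 2 then show ?thesis using cn_of_P[OF z, of "(1,0,0)"] by (simp add: vsimps cn_simp)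
  next
    case 3 then show ?thesis using cn_of_P[OF z, of "(0,1,0)"] by (simp add: vsimps cn_simp)
  qed
next
  assume c: "cn z"
  obtain z1 z2 z3 where zz: "z = (z1, z2, z3)" by (cases z)
  have c': "2 * z1 * z2 = z3 * (z1 + z2)" using c zz by (simp add: cn_simp)
  show "P z \<in> {P (Rv x y) | x y. x \<noteq> 0 \<and> y \<noteq> 0} \<union> {P (1,0,0), P (0,1,0)}"
  proof (cases "z1 = 0")
    case z1: True
    then have "z3 * z2 = 0" using c' by simp
    then show ?thesis
    proof (cases "z2 = 0")
      case True
      then have "z3 \<noteq> 0" using z zz z1 by (simp add: vsimps)
      have "Rv 1 (-1) = ((0, 0, -2) :: 'a vec3)" by (simp add: Rv_def)
      then have "P z = P (Rv 1 (-1))" using P_eq[OF z, of "(0,0,-2)"] two z1 True zz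
        by (simp add: vsimps)
      then show ?thesis
        by (intro UnI1) (rule CollectI, rule exI[of _ 1], rule exI[of _ "-1"], simp)
    next
      case False
      then have "z3 = 0" using \<open>z3 * z2 = 0\<close> by simp
      then have "P z = P (0,1,0)" using P_eq[OF z, of "(0,1,0)"] z1 zz by (simp add: vsimps)
      then show ?thesis by blast
    qed
  next
    case z1: False
    show ?thesis
    proof (cases "z2 = 0")
      case True
      then have "z3 = 0" using c' z1 by simp
      then have "P z = P (1,0,0)" using P_eq[OF z, of "(1,0,0)"] True zz by (simp add: vsimps)
      then show ?thesis by blast
    next
      case z2: False
      have "vcross z (Rv z1 z2) = vzero" unfolding zz Rv_def using c'
        by (simp add: vsimps)
      then have "P z = P (Rv z1 z2)" using P_eq[OF z Rv_nz[OF two z1 z2]] by simp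
      then show ?thesis using z1 z2 by blast
    qed
  qed
qed

lemma Xdec:
  assumes "incid X (L (0,0,1))" "X \<noteq> P (1,0,0)" "X \<noteq> P (0,1,0)"
  shows "\<exists>x y. x \<noteq> 0 \<and> y \<noteq> 0 \<and> X = P (x, y, 0)"
proof -
  obtain u where u: "u \<noteq> vzero" "X = P u" using P_surj by blast
  obtain x y z where uu: "u = (x, y, z)" by (cases u)
  have "z = 0" using assms(1) incid_PL[OF u(1), of "(0,0,1)"] u uu by (simp add: vsimps)
  moreover have "y \<noteq> 0" using assms(2) P_eq[OF u(1), of "(1,0,0)"] u uu \<open>z = 0\<close> by (auto simp: vsimps)
  moreover have "x \<noteq> 0" using assms(3) P_eq[OF u(1), of "(0,1,0)"] u uu \<open>z = 0\<close> by (auto simp: vsimps)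
  ultimately show ?thesis using u uu by blast
qed

lemma Xcond:
  assumes "x \<noteq> 0" "y \<noteq> 0"
  shows "incid (P (x, y, 0)) (L (0,0,1)) \<and> P (x, y, 0) \<noteq> P (1,0,0) \<and> P (x, y, 0) \<noteq> P (0,1,0)"
  using assms incid_PL[of "(x, y, 0)" "(0,0,1)"] P_eq[of "(x, y, 0)" "(1,0,0)"] P_eq[of "(x, y, 0)" "(0,1,0)"]
  by (simp add: vsimps)

end

context frame begin

lemma frame_main:
  assumes two: "(2::'a) \<noteq> 0" and A: "A = P (1,0,0)" and B: "B = P (0,1,0)"
    and C: "C = P (0,0,1)" and D: "D = P (1,1,1)"
  shows "tangent_at A C B D \<noteq> tangent_at B D A C \<and>
    (\<forall>X. incid X (join A B) \<and> X \<noteq> A \<and> X \<noteq> B \<longrightarrow>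
        rho_line A B X \<noteq> meet (tangent_at A C B D) (tangent_at B D A C) \<and>
        \<not> incid X (join (rho_line A B X) (meet (tangent_at A C B D) (tangent_at B D A C))))
    \<and> harmonic_curve A C B D =
        {rho_refl X (join (rho_line A B X) (meet (tangent_at A C B D) (tangent_at B D A C))) C | X.
            incid X (join A B) \<and> X \<noteq> A \<and> X \<noteq> B} \<union> {A, B}"
proof -
  have ta: "tangent_at A C B D = L (0, -2, 1)" using tangents(1)[OF two] A B C D by simp
  have tb: "tangent_at B D A C = L (2, 0, -1)" using tangents(2)[OF two] A B C D by simp
  have mab: "meet (tangent_at A C B D) (tangent_at B D A C) = P (2, 2, 4)"
    unfolding ta tb by (rule ab_facts(2)[OF two])
  have jAB: "join A B = L (0,0,1)" unfolding A B using join_P[of "(1,0,0)" "(0,1,0)"] by (simp add: vsimps)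
  have part2: "\<forall>X. incid X (join A B) \<and> X \<noteq> A \<and> X \<noteq> B \<longrightarrow>
        rho_line A B X \<noteq> P (2, 2, 4) \<and> \<not> incid X (join (rho_line A B X) (P (2, 2, 4))) \<and>
        rho_refl X (join (rho_line A B X) (P (2, 2, 4))) C \<in> {P (Rv x y) | x y. x \<noteq> 0 \<and> y \<noteq> 0}"
  proof (intro allI impI)
    fix X assume h: "incid X (join A B) \<and> X \<noteq> A \<and> X \<noteq> B"
    have "incid X (L (0,0,1))" "X \<noteq> P (1,0,0)" "X \<noteq> P (0,1,0)" using h jAB A B by auto
    then obtain x y where xy: "x \<noteq> 0" "y \<noteq> 0" "X = P (x, y, 0)" using Xdec by blast
    show "rho_line A B X \<noteq> P (2, 2, 4) \<and> \<not> incid X (join (rho_line A B X) (P (2, 2, 4))) \<and>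
        rho_refl X (join (rho_line A B X) (P (2, 2, 4))) C \<in> {P (Rv x y) | x y. x \<noteq> 0 \<and> y \<noteq> 0}"
      using Xcomp[OF two xy(1,2)] xy A B C by blast
  qed
  have S: "{rho_refl X (join (rho_line A B X) (P (2, 2, 4))) C | X.
            incid X (join A B) \<and> X \<noteq> A \<and> X \<noteq> B} = {P (Rv x y) | x y. x \<noteq> 0 \<and> y \<noteq> 0}"
  proof (intro set_eqI iffI)
    fix Z assume "Z \<in> {rho_refl X (join (rho_line A B X) (P (2, 2, 4))) C | X.
            incid X (join A B) \<and> X \<noteq> A \<and> X \<noteq> B}"
    then show "Z \<in> {P (Rv x y) | x y. x \<noteq> 0 \<and> y \<noteq> 0}" using part2 by blast
  next
    fix Z assume "Z \<in> {P (Rv x y) | x y. x \<noteq> 0 \<and> y \<noteq> 0}"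
    then obtain x y where xy: "x \<noteq> 0" "y \<noteq> 0" "Z = P (Rv x y)" by blast
    have c: "incid (P (x, y, 0)) (join A B) \<and> P (x, y, 0) \<noteq> A \<and> P (x, y, 0) \<noteq> B"
      using Xcond[OF xy(1,2)] jAB A B by simp
    have "Z = rho_refl (P (x, y, 0)) (join (rho_line A B (P (x, y, 0))) (P (2, 2, 4))) C"
      using Xcomp[OF two xy(1,2)] xy(3) A B C by simp
    then show "Z \<in> {rho_refl X (join (rho_line A B X) (P (2, 2, 4))) C | X.
            incid X (join A B) \<and> X \<noteq> A \<and> X \<noteq> B}" using c by blast
  qed
  have HC: "harmonic_curve A C B D = {P (Rv x y) | x y. x \<noteq> 0 \<and> y \<noteq> 0} \<union> {A, B}"
  proof (rule set_eqI)
    fix Z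
    obtain z where z: "z \<noteq> vzero" "Z = P z" using P_surj by blast
    show "Z \<in> harmonic_curve A C B D \<longleftrightarrow> Z \<in> {P (Rv x y) | x y. x \<noteq> 0 \<and> y \<noteq> 0} \<union> {A, B}"
      unfolding z(2) A B C D using HC_iff[OF two z(1)] RHS_iff[OF two z(1)] by simp
  qed
  show ?thesis unfolding mab S HC using ab_facts(1)[OF two] ta tb part2 by simp
qed

end

lemma det_cyc: "vdot c (vcross a b) = vdot a (vcross b c)"
  by (cases a, cases b, cases c) (simp add: vsimps algebra_simps)
lemma det_cyc2: "vdot b (vcross c a) = vdot a (vcross b c)"
  by (cases a, cases b, cases c) (simp add: vsimps algebra_simps)
lemma det_scale: "vdot (vscale x a) (vcross (vscale y b) (vscale z c)) = x * y * z * vdot a (vcross b c)"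
  by (cases a, cases b, cases c) (simp add: vsimps algebra_simps)
lemma Mv_e1: "Mv a b c (1,0,0) = a" by (cases a, cases b, cases c) (simp add: Mv_simp)
lemma Mv_e2: "Mv a b c (0,1,0) = b" by (cases a, cases b, cases c) (simp add: Mv_simp)
lemma Mv_e3: "Mv a b c (0,0,1) = c" by (cases a, cases b, cases c) (simp add: Mv_simp)
lemma Mv_111: "Mv (vscale x a) (vscale y b) (vscale z c) (1,1,1) = Mv a b c (x, y, z)"
  by (cases a, cases b, cases c) (simp add: Mv_simp vsimps)

lemma collinear_of_det:
  assumes "vdot c (vcross a b) = 0" "vcross a b \<noteq> vzero" "c \<noteq> vzero"
  shows "\<exists>l. incid (pp a) l \<and> incid (pp b) l \<and> incid (pp c) l"
proof -
  have a: "a \<noteq> vzero" and b: "b \<noteq> vzero" using cross_nz[OF assms(2)] by auto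
  show ?thesis
    using incid_pp_ll[OF a assms(2)] incid_pp_ll[OF b assms(2)] incid_pp_ll[OF assms(3) assms(2)] assms(1)
    by (intro exI[of _ "ll (vcross a b)"]) simp
qed

lemma frame_setup:
  assumes quad: "general_position A C B D"
  shows "\<exists>fa fb fc. frame fa fb fc \<and> A = frame.P fa fb fc (1,0,0) \<and> B = frame.P fa fb fc (0,1,0)
          \<and> C = frame.P fa fb fc (0,0,1) \<and> D = frame.P fa fb fc (1,1,1)"
proof -
  have dist: "distinct [A, C, B, D]" using quad unfolding general_position_def by blast
  have gp: "\<And>P Q R. P \<in> {A, C, B, D} \<Longrightarrow> Q \<in> {A, C, B, D} \<Longrightarrow> R \<in> {A, C, B, D} \<Longrightarrow>
     distinct [P, Q, R] \<Longrightarrow> \<not> (\<exists>l. incid P l \<and> incid Q l \<and> incid R l)"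
    using quad unfolding general_position_def by blast
  have nABC: "\<not> (\<exists>l. incid A l \<and> incid B l \<and> incid C l)" by (rule gp) (use dist in auto)
  have nBCD: "\<not> (\<exists>l. incid B l \<and> incid C l \<and> incid D l)" by (rule gp) (use dist in auto)
  have nCAD: "\<not> (\<exists>l. incid C l \<and> incid A l \<and> incid D l)" by (rule gp) (use dist in auto)
  have nABD: "\<not> (\<exists>l. incid A l \<and> incid B l \<and> incid D l)" by (rule gp) (use dist in auto)
  obtain a0 where a0: "a0 \<noteq> vzero" "A = pp a0" using pp_surj by blast
  obtain b0 where b0: "b0 \<noteq> vzero" "B = pp b0" using pp_surj by blast
  obtain c0 where c0: "c0 \<noteq> vzero" "C = pp c0" using pp_surj by blast
  obtain d0 where d0: "d0 \<noteq> vzero" "D = pp d0" using pp_surj by blast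
  have ab: "vcross a0 b0 \<noteq> vzero" using pp_eq[OF a0(1) b0(1)] dist a0 b0 by auto
  have bc: "vcross b0 c0 \<noteq> vzero" using pp_eq[OF b0(1) c0(1)] dist b0 c0 by auto
  have ca: "vcross c0 a0 \<noteq> vzero" using pp_eq[OF c0(1) a0(1)] dist c0 a0 by auto
  have dl: "vdot a0 (vcross b0 c0) \<noteq> 0"
    using collinear_of_det[OF _ ab c0(1)] nABC a0 b0 c0 det_cyc by metis
  have al: "vdot d0 (vcross b0 c0) \<noteq> 0"
    using collinear_of_det[OF _ bc d0(1)] nBCD b0 c0 d0 by metis
  have be: "vdot d0 (vcross c0 a0) \<noteq> 0"
    using collinear_of_det[OF _ ca d0(1)] nCAD c0 a0 d0 by metis
  have ga: "vdot d0 (vcross a0 b0) \<noteq> 0"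
    using collinear_of_det[OF _ ab d0(1)] nABD a0 b0 d0 by metis
  define fa where "fa = vscale (vdot d0 (vcross b0 c0)) a0"
  define fb where "fb = vscale (vdot d0 (vcross c0 a0)) b0"
  define fc where "fc = vscale (vdot d0 (vcross a0 b0)) c0"
  have fr: "frame fa fb fc" unfolding frame_def fa_def fb_def fc_def det_scale using dl al be ga by simp
  have "A = frame.P fa fb fc (1,0,0)" unfolding frame.P_def[OF fr] Mv_e1 unfolding fa_def using a0 pp_scale[OF al a0(1)] by simp
  moreover have "B = frame.P fa fb fc (0,1,0)" unfolding frame.P_def[OF fr] Mv_e2 unfolding fb_def using b0 pp_scale[OF be b0(1)] by simp
  moreover have "C = frame.P fa fb fc (0,0,1)" unfolding frame.P_def[OF fr] Mv_e3 unfolding fc_def using c0 pp_scale[OF ga c0(1)] by simp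
  moreover have "D = frame.P fa fb fc (1,1,1)" unfolding frame.P_def[OF fr] unfolding fa_def fb_def fc_def Mv_111 T6
    using d0 pp_scale[OF dl d0(1)] by simp
  ultimately show ?thesis using fr by blast
qed

theorem mainTheorem4:
  fixes A C B D :: "'a::field ppoint"
  assumes char2: "(2::'a) \<noteq> 0"
    and quad: "general_position A C B D"
  defines "a \<equiv> tangent_at A C B D"
    and "b \<equiv> tangent_at B D A C"
  shows "a \<noteq> b \<and>
    (\<forall>X. incid X (join A B) \<and> X \<noteq> A \<and> X \<noteq> B \<longrightarrow>
        rho_line A B X \<noteq> meet a b \<and> \<not> incid X (join (rho_line A B X) (meet a b)))
    \<and> harmonic_curve A C B D =
        {rho_refl X (join (rho_line A B X) (meet a b)) C | X.
            incid X (join A B) \<and> X \<noteq> A \<and> X \<noteq> B} \<union> {A, B}"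
proof -
  obtain fa fb fc where fr: "frame fa fb fc" and e: "A = frame.P fa fb fc (1,0,0)" "B = frame.P fa fb fc (0,1,0)"
    "C = frame.P fa fb fc (0,0,1)" "D = frame.P fa fb fc (1,1,1)"
    using frame_setup[OF quad] by blast
  interpret F: frame fa fb fc by (rule fr)
  show ?thesis unfolding a_def b_def using F.frame_main[OF char2 e] .
qed


end
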